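(* Let $(F_S,\iota)$ be an embedded local étale algebra, $\Gamma\subseteq\mathrm{PGL}_2(F_S)$ a semi-simple plectic subgroup and $\gamma\in\Gamma$ an element of finite order. Then $\gamma$ fixes a polysimplex of $\mathcal T_\Gamma$.
   Context: Fix a prime $p$ and let $\mathbf{C}$ be the completion of an algebraic closure of $\mathbb{Q}_p$ or of $\mathbb{F}_p((T))$. An embedded local étale algebra $(F_S,\iota)$ consists of a finite non-empty set $S$, non-Archimedean local fields $F_\mathfrak p$ ($\mathfrak p\in S$) of residue characteristic $p$ and the same characteristic as $\mathbf C$, and embeddings $\iota_\mathfrak p\colon F_\mathfrak p\hookrightarrow\mathbf C$ (so $\mathbb P^1(F_\mathfrak p)\subseteq\mathbb P^1(\mathbf C)$). $\mathrm{PGL}_2(F_S)=\prod_\mathfrak p\mathrm{PGL}_2(F_\mathfrak p)$ acts componentwise by Möbius transformations on $\prod_{\mathfrak p\in S}\mathbb P^1(\mathbf C)$. The limit set $\mathcal L^S_\Gamma$ of a subgroup $\Gamma$ is the set of $x$ with $\gamma_j(y)\to x$ for some $y$ and pairwise distinct $\gamma_j\in\Gamma$. $\Gamma$ is plectic if $\mathcal L^S_\Gamma=\bigcup_\mathfrak p\big(\mathcal L_{\Gamma,\mathfrak p}\times\prod_{\mathfrak q\ne\mathfrak p}\mathbb P^1(\mathbf C)\big)$ for some subsets $\mathcal L_{\Gamma,\mathfrak p}\subseteq\mathbb P^1(F_\mathfrak p)$, and semi-simple if no $\mathcal L_{\Gamma,\mathfrak p}$ has exactly one element. For such $\Gamma$,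 $\mathcal T_{\Gamma,\mathfrak p}$ is a single vertex if $\mathcal L_{\Gamma,\mathfrak p}=\emptyset$, and otherwise the union of all geodesics in the Bruhat–Tits tree of $\mathrm{PGL}_2(F_\mathfrak p)$ (ends identified with $\mathbb P^1(F_\mathfrak p)$) joining two distinct points of $\mathcal L_{\Gamma,\mathfrak p}$; $\Gamma$ acts (via the projections) on the polysimplicial complex $\mathcal T_\Gamma=\prod_\mathfrak p\mathcal T_{\Gamma,\mathfrak p}$, whose polysimplices are products of vertices and edges of the factors. *)

theory Defs
  imports Complex_Main "HOL-Computational_Algebra.Polynomial"
begin

definition nonarch_abs :: "('c::field \<Rightarrow> real) \<Rightarrow> bool" where
  "nonarch_abs av \<longleftrightarrow> (\<forall>x. av x \<ge> 0) \<and> (\<forall>x. av x = 0 \<longleftrightarrow> x = 0)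
     \<and> (\<forall>x y. av (x * y) = av x * av y) \<and> (\<forall>x y. av (x + y) \<le> max (av x) (av y))
     \<and> (\<exists>x. av x \<noteq> 0 \<and> av x \<noteq> 1)"

definition av_conv :: "('c::field \<Rightarrow> real) \<Rightarrow> (nat \<Rightarrow> 'c) \<Rightarrow> 'c \<Rightarrow> bool" where
  "av_conv av X L \<longleftrightarrow> (\<lambda>n. av (X n - L)) \<longlonglongrightarrow> 0"

definition av_complete :: "('c::field \<Rightarrow> real) \<Rightarrow> bool" where
  "av_complete av \<longleftrightarrow> (\<forall>X. (\<forall>e>0. \<exists>N. \<forall>m\<ge>N. \<forall>n\<ge>N. av (X m - X n) < e) \<longrightarrow> (\<exists>L. av_conv av X L))"

definition av_closure :: "('c::field \<Rightarrow> real) \<Rightarrow> 'c set \<Rightarrow> 'c set" where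
  "av_closure av A = {L. \<exists>X. range X \<subseteq> A \<and> av_conv av X L}"

definition av_closed :: "('c::field \<Rightarrow> real) \<Rightarrow> 'c set \<Rightarrow> bool" where
  "av_closed av A \<longleftrightarrow> av_closure av A \<subseteq> A"

definition av_dense :: "('c::field \<Rightarrow> real) \<Rightarrow> 'c set \<Rightarrow> bool" where
  "av_dense av A \<longleftrightarrow> (\<forall>x. \<forall>e>0. \<exists>y\<in>A. av (x - y) < e)"

definition subfield :: "'c::field set \<Rightarrow> bool" where
  "subfield K \<longleftrightarrow> 0 \<in> K \<and> 1 \<in> K \<and> (\<forall>x\<in>K. \<forall>y\<in>K. x + y \<in> K \<and> x - y \<in> K \<and> x * y \<in> K)
     \<and> (\<forall>x\<in>K. inverse x \<in> K)"

definition gen_subfield :: "'c::field set \<Rightarrow> 'c set" where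
  "gen_subfield A = \<Inter>{K. subfield K \<and> A \<subseteq> K}"

definition alg_closure_in :: "'c::field set \<Rightarrow> 'c set" where
  "alg_closure_in K = {x. \<exists>q. q \<noteq> 0 \<and> (\<forall>i. coeff q i \<in> K) \<and> poly q x = 0}"

definition alg_closed_field :: "'c::field itself \<Rightarrow> bool" where
  "alg_closed_field TYPE('c) \<longleftrightarrow> (\<forall>q::'c poly. degree q > 0 \<longrightarrow> (\<exists>x. poly q x = 0))"

text \<open>(C, av) is (isometric up to equivalence of absolute values to) the completion of an
  algebraic closure of Q_p (char 0 case) or of F_p((T)) (char p case): it is complete,
  algebraically closed, and the algebraic closure of the closure K0 of the prime field
  (resp. of F_p(T) with 0 < |T| < 1) is dense.  Residue characteristic p: |p| < 1.\<close>
definition is_C :: "nat \<Rightarrow> ('c::field \<Rightarrow> real) \<Rightarrow> bool" where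
  "is_C p av \<longleftrightarrow> prime p \<and> nonarch_abs av \<and> av_complete av \<and> alg_closed_field TYPE('c)
     \<and> av (of_nat p) < 1
     \<and> (((\<forall>n::nat. n > 0 \<longrightarrow> of_nat n \<noteq> (0::'c))
            \<and> av_dense av (alg_closure_in (av_closure av (gen_subfield {}))))
        \<or> (of_nat p = (0::'c) \<and> (\<exists>T. 0 < av T \<and> av T < 1
            \<and> av_dense av (alg_closure_in (av_closure av (gen_subfield {T}))))))"

definition valring :: "('c::field \<Rightarrow> real) \<Rightarrow> 'c set \<Rightarrow> 'c set" where
  "valring av F = {x\<in>F. av x \<le> 1}"

definition uniformizer :: "('c::field \<Rightarrow> real) \<Rightarrow> 'c set \<Rightarrow> 'c \<Rightarrow> bool" where
  "uniformizer av F \<pi> \<longleftrightarrow> \<pi> \<in> F \<and> 0 < av \<pi> \<and> av \<pi> < 1 \<and> (\<forall>x\<in>F. av x < 1 \<longrightarrow> av x \<le> av \<pi>)"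

text \<open>A non-Archimedean local field inside C: a closed (hence complete) subfield whose
  induced absolute value is discrete and non-trivial, with finite residue field.\<close>
definition local_field :: "('c::field \<Rightarrow> real) \<Rightarrow> 'c set \<Rightarrow> bool" where
  "local_field av F \<longleftrightarrow> subfield F \<and> av_closed av F \<and> (\<exists>\<pi>. uniformizer av F \<pi>)
     \<and> (\<exists>R. finite R \<and> R \<subseteq> valring av F \<and> (\<forall>x\<in>valring av F. \<exists>r\<in>R. av (x - r) < 1))"

type_synonym 'c P1 = "'c option"  \<comment> \<open>None is the point at infinity\<close>
type_synonym 'c mat2 = "'c \<times> 'c \<times> 'c \<times> 'c" \<comment> \<open>(a,b,c,d) = [[a,b],[c,d]]\<close>
type_synonym 'c vec2 = "'c \<times> 'c"

definition P1_of :: "'c set \<Rightarrow> 'c P1 set" where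
  "P1_of F = insert None (Some ` F)"

fun mdet :: "'c::field mat2 \<Rightarrow> 'c" where
  "mdet (a, b, c, d) = a * d - b * c"

fun mmult :: "'c::field mat2 \<Rightarrow> 'c mat2 \<Rightarrow> 'c mat2" where
  "mmult (a, b, c, d) (a', b', c', d') =
     (a * a' + b * c', a * b' + b * d', c * a' + d * c', c * b' + d * d')"

fun minv :: "'c::field mat2 \<Rightarrow> 'c mat2" where
  "minv (a, b, c, d) = (let e = a * d - b * c in (d / e, - b / e, - c / e, a / e))"

fun msmult :: "'c::field \<Rightarrow> 'c mat2 \<Rightarrow> 'c mat2" where
  "msmult t (a, b, c, d) = (t * a, t * b, t * c, t * d)"

fun mvec :: "'c::field mat2 \<Rightarrow> 'c vec2 \<Rightarrow> 'c vec2" where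
  "mvec (a, b, c, d) (x, y) = (a * x + b * y, c * x + d * y)"

definition GL2 :: "'c::field set \<Rightarrow> 'c mat2 set" where
  "GL2 F = {(a, b, c, d). a \<in> F \<and> b \<in> F \<and> c \<in> F \<and> d \<in> F \<and> a * d - b * c \<noteq> 0}"

text \<open>An element of PGL_2(F): the class of an invertible matrix modulo F^*.\<close>
definition mclass :: "'c::field set \<Rightarrow> 'c mat2 \<Rightarrow> 'c mat2 set" where
  "mclass F A = {msmult t A | t. t \<in> F \<and> t \<noteq> 0}"

fun mobius :: "'c::field mat2 \<Rightarrow> 'c P1 \<Rightarrow> 'c P1" where
  "mobius (a, b, c, d) None = (if c = 0 then None else Some (a / c))"
| "mobius (a, b, c, d) (Some x) = (if c * x + d = 0 then None else Some ((a * x + b) / (c * x + d)))"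

text \<open>Action of a PGL_2 class via a representative (independent of the choice).\<close>
definition pgl_act :: "'c::field mat2 set \<Rightarrow> 'c P1 \<Rightarrow> 'c P1" where
  "pgl_act g z = mobius (SOME A. A \<in> g) z"

definition PGL2_S :: "'s set \<Rightarrow> ('s \<Rightarrow> 'c::field set) \<Rightarrow> ('s \<Rightarrow> 'c mat2 set) set" where
  "PGL2_S S F = {g. (\<forall>s\<in>S. \<exists>A. A \<in> GL2 (F s) \<and> g s = mclass (F s) A) \<and> (\<forall>s. s \<notin> S \<longrightarrow> g s = {})}"

definition pgl_one :: "'s set \<Rightarrow> ('s \<Rightarrow> 'c::field set) \<Rightarrow> ('s \<Rightarrow> 'c mat2 set)" where
  "pgl_one S F = (\<lambda>s. if s \<in> S then mclass (F s) (1, 0, 0, 1) else {})"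

definition pgl_mult :: "('s \<Rightarrow> 'c::field mat2 set) \<Rightarrow> ('s \<Rightarrow> 'c mat2 set) \<Rightarrow> ('s \<Rightarrow> 'c mat2 set)" where
  "pgl_mult g h = (\<lambda>s. {mmult A B | A B. A \<in> g s \<and> B \<in> h s})"

definition pgl_inv :: "('s \<Rightarrow> 'c::field mat2 set) \<Rightarrow> ('s \<Rightarrow> 'c mat2 set)" where
  "pgl_inv g = (\<lambda>s. minv ` g s)"

primrec pgl_pow :: "'s set \<Rightarrow> ('s \<Rightarrow> 'c::field set) \<Rightarrow> ('s \<Rightarrow> 'c mat2 set) \<Rightarrow> nat \<Rightarrow> ('s \<Rightarrow> 'c mat2 set)" where
  "pgl_pow S F g 0 = pgl_one S F"
| "pgl_pow S F g (Suc n) = pgl_mult g (pgl_pow S F g n)"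

definition pgl_subgroup :: "'s set \<Rightarrow> ('s \<Rightarrow> 'c::field set) \<Rightarrow> ('s \<Rightarrow> 'c mat2 set) set \<Rightarrow> bool" where
  "pgl_subgroup S F \<Gamma> \<longleftrightarrow> \<Gamma> \<subseteq> PGL2_S S F \<and> pgl_one S F \<in> \<Gamma>
     \<and> (\<forall>g\<in>\<Gamma>. \<forall>h\<in>\<Gamma>. pgl_mult g h \<in> \<Gamma>) \<and> (\<forall>g\<in>\<Gamma>. pgl_inv g \<in> \<Gamma>)"

definition finite_order :: "'s set \<Rightarrow> ('s \<Rightarrow> 'c::field set) \<Rightarrow> ('s \<Rightarrow> 'c mat2 set) \<Rightarrow> bool" where
  "finite_order S F g \<longleftrightarrow> (\<exists>n>0. pgl_pow S F g n = pgl_one S F)"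

definition P1_conv :: "('c::field \<Rightarrow> real) \<Rightarrow> (nat \<Rightarrow> 'c P1) \<Rightarrow> 'c P1 \<Rightarrow> bool" where
  "P1_conv av X x \<longleftrightarrow> (case x of
      Some a \<Rightarrow> (\<forall>e>0. eventually (\<lambda>n. \<exists>z. X n = Some z \<and> av (z - a) < e) sequentially)
    | None \<Rightarrow> (\<forall>M. eventually (\<lambda>n. X n = None \<or> (\<exists>z. X n = Some z \<and> av z > M)) sequentially))"

definition PS :: "'s set \<Rightarrow> ('s \<Rightarrow> 'c P1) set" where
  "PS S = {x. \<forall>s. s \<notin> S \<longrightarrow> x s = None}"

definition limit_set :: "('c::field \<Rightarrow> real) \<Rightarrow> 's set \<Rightarrow> ('s \<Rightarrow> 'c mat2 set) set \<Rightarrow> ('s \<Rightarrow> 'c P1) set" where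
  "limit_set av S \<Gamma> = {x \<in> PS S. \<exists>y \<in> PS S. \<exists>\<gamma>::nat \<Rightarrow> ('s \<Rightarrow> 'c mat2 set).
      inj \<gamma> \<and> range \<gamma> \<subseteq> \<Gamma> \<and> (\<forall>s\<in>S. P1_conv av (\<lambda>j. pgl_act (\<gamma> j s) (y s)) (x s))}"

definition plectic_semisimple_with ::
  "('c::field \<Rightarrow> real) \<Rightarrow> 's set \<Rightarrow> ('s \<Rightarrow> 'c set) \<Rightarrow> ('s \<Rightarrow> 'c mat2 set) set \<Rightarrow> ('s \<Rightarrow> 'c P1 set) \<Rightarrow> bool" where
  "plectic_semisimple_with av S F \<Gamma> Lp \<longleftrightarrow>
     (\<forall>s\<in>S. Lp s \<subseteq> P1_of (F s) \<and> (\<forall>a. Lp s \<noteq> {a}))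
     \<and> limit_set av S \<Gamma> = {x \<in> PS S. \<exists>s\<in>S. x s \<in> Lp s}"

definition lattice_span :: "('c::field \<Rightarrow> real) \<Rightarrow> 'c set \<Rightarrow> 'c vec2 \<Rightarrow> 'c vec2 \<Rightarrow> 'c vec2 set" where
  "lattice_span av F u w = {(a * fst u + b * fst w, a * snd u + b * snd w) | a b.
      a \<in> valring av F \<and> b \<in> valring av F}"

definition is_lattice :: "('c::field \<Rightarrow> real) \<Rightarrow> 'c set \<Rightarrow> 'c vec2 set \<Rightarrow> bool" where
  "is_lattice av F L \<longleftrightarrow> (\<exists>u w. fst u \<in> F \<and> snd u \<in> F \<and> fst w \<in> F \<and> snd w \<in> F
      \<and> fst u * snd w - snd u * fst w \<noteq> 0 \<and> L = lattice_span av F u w)"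

definition vscale :: "'c::field \<Rightarrow> 'c vec2 set \<Rightarrow> 'c vec2 set" where
  "vscale t L = (\<lambda>(x, y). (t * x, t * y)) ` L"

definition hclass :: "'c::field set \<Rightarrow> 'c vec2 set \<Rightarrow> 'c vec2 set set" where
  "hclass F L = {vscale t L | t. t \<in> F \<and> t \<noteq> 0}"

definition bt_vertices :: "('c::field \<Rightarrow> real) \<Rightarrow> 'c set \<Rightarrow> 'c vec2 set set set" where
  "bt_vertices av F = {hclass F L | L. is_lattice av F L}"

definition bt_adj :: "('c::field \<Rightarrow> real) \<Rightarrow> 'c set \<Rightarrow> 'c vec2 set set \<Rightarrow> 'c vec2 set set \<Rightarrow> bool" where
  "bt_adj av F v w \<longleftrightarrow> v \<in> bt_vertices av F \<and> w \<in> bt_vertices av F \<and>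
     (\<exists>L\<in>v. \<exists>L'\<in>w. \<exists>\<pi>. uniformizer av F \<pi> \<and> vscale \<pi> L \<subset> L' \<and> L' \<subset> L)"

definition pgl_act_vertex :: "'c::field mat2 set \<Rightarrow> 'c vec2 set set \<Rightarrow> 'c vec2 set set" where
  "pgl_act_vertex g v = (\<lambda>L. mvec (SOME A. A \<in> g) ` L) ` v"

text \<open>Standard identification of P^1(F) with the ends: the point z corresponds to the line
  spanned by (z,1), infinity to the line spanned by (1,0).\<close>
fun P1_vec :: "'c::field P1 \<Rightarrow> 'c vec2" where
  "P1_vec None = (1, 0)"
| "P1_vec (Some z) = (z, 1)"

text \<open>Vertices of the geodesic (apartment) joining two distinct ends l1, l2.\<close>
definition geodesic :: "('c::field \<Rightarrow> real) \<Rightarrow> 'c set \<Rightarrow> 'c P1 \<Rightarrow> 'c P1 \<Rightarrow> 'c vec2 set set set" where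
  "geodesic av F l1 l2 = {hclass F (lattice_span av F (P1_vec l1)
       (t * fst (P1_vec l2), t * snd (P1_vec l2))) | t. t \<in> F \<and> t \<noteq> 0}"

text \<open>The tree T_{Gamma,p}: vertices and edges. vtx s is the chosen single vertex
  used when Lp s is empty.\<close>
definition T_vertices :: "('c::field \<Rightarrow> real) \<Rightarrow> 'c set \<Rightarrow> 'c P1 set \<Rightarrow> 'c vec2 set set \<Rightarrow> 'c vec2 set set set" where
  "T_vertices av F L v0 = (if L = {} then {v0}
      else \<Union>{geodesic av F l1 l2 | l1 l2. l1 \<in> L \<and> l2 \<in> L \<and> l1 \<noteq> l2})"

definition T_edges :: "('c::field \<Rightarrow> real) \<Rightarrow> 'c set \<Rightarrow> 'c P1 set \<Rightarrow> 'c vec2 set set set set" where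
  "T_edges av F L = {{v, w} | v w. bt_adj av F v w \<and>
      (\<exists>l1 l2. l1 \<in> L \<and> l2 \<in> L \<and> l1 \<noteq> l2 \<and> v \<in> geodesic av F l1 l2 \<and> w \<in> geodesic av F l1 l2)}"

text \<open>Polysimplices of T_Gamma = prod_p T_{Gamma,p}: each factor is a vertex or an edge.\<close>
definition polysimplex ::
  "('c::field \<Rightarrow> real) \<Rightarrow> 's set \<Rightarrow> ('s \<Rightarrow> 'c set) \<Rightarrow> ('s \<Rightarrow> 'c P1 set) \<Rightarrow> ('s \<Rightarrow> 'c vec2 set set)
     \<Rightarrow> ('s \<Rightarrow> 'c vec2 set set set) \<Rightarrow> bool" where
  "polysimplex av S F Lp vtx \<sigma> \<longleftrightarrow> (\<forall>s. s \<notin> S \<longrightarrow> \<sigma> s = {}) \<and>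
     (\<forall>s\<in>S. (\<exists>v\<in>T_vertices av (F s) (Lp s) (vtx s). \<sigma> s = {v})
            \<or> \<sigma> s \<in> T_edges av (F s) (Lp s))"

end

theory Submission
  imports Defs
begin


section \<open>Absolute values\<close>

lemma na_nonneg: "nonarch_abs av \<Longrightarrow> av x \<ge> 0" by (simp add: nonarch_abs_def)
lemma na_zero: "nonarch_abs av \<Longrightarrow> av x = 0 \<longleftrightarrow> x = 0" by (simp add: nonarch_abs_def)
lemma na_mult: "nonarch_abs av \<Longrightarrow> av (x * y) = av x * av y" by (simp add: nonarch_abs_def)
lemma na_ultra: "nonarch_abs av \<Longrightarrow> av (x + y) \<le> max (av x) (av y)" by (simp add: nonarch_abs_def)
lemma na_pos: "nonarch_abs av \<Longrightarrow> x \<noteq> 0 \<Longrightarrow> av x > 0"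
  using na_nonneg na_zero by (metis less_eq_real_def)

lemma na_one: assumes "nonarch_abs av" shows "av 1 = 1"
proof -
  have "av 1 = av 1 * av 1" using na_mult[OF assms, of 1 1] by simp
  moreover have "av 1 \<noteq> 0" using na_zero[OF assms, of 1] by simp
  ultimately show ?thesis by (metis mult_cancel_left1)
qed

lemma na_minus1: assumes "nonarch_abs av" shows "av (-1) = 1"
proof -
  have "av (-1) * av (-1) = 1" using na_mult[OF assms, of "-1" "-1"] na_one[OF assms] by simp
  moreover have "av (-1) \<ge> 0" using na_nonneg[OF assms] .
  ultimately show ?thesis by (metis linorder_not_le mult_le_cancel_right2 nle_le not_one_le_zero)
qed

lemma na_minus: assumes "nonarch_abs av" shows "av (- x) = av x"
  using na_mult[OF assms, of "-1" x] na_minus1[OF assms] by simp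

lemma na_diff_comm: assumes "nonarch_abs av" shows "av (x - y) = av (y - x)"
  using na_minus[OF assms, of "x - y"] by simp

lemma na_diff: assumes "nonarch_abs av" shows "av (x - y) \<le> max (av x) (av y)"
  using na_ultra[OF assms, of x "-y"] na_minus[OF assms, of y] by simp

lemma na_inverse: assumes "nonarch_abs av" shows "av (inverse x) = inverse (av x)"
proof (cases "x = 0")
  case True then show ?thesis using na_zero[OF assms, of 0] by simp
next
  case False
  have "av (inverse x) * av x = 1" using na_mult[OF assms, of "inverse x" x] na_one[OF assms] False by simp
  then show ?thesis by (metis inverse_unique mult.commute)
qed

lemma na_divide: assumes "nonarch_abs av" shows "av (x / y) = av x / av y"
  by (simp add: divide_inverse na_mult[OF assms] na_inverse[OF assms])

lemma na_power: assumes "nonarch_abs av" shows "av (x ^ n) = av x ^ n"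
  by (induction n) (simp_all add: na_one[OF assms] na_mult[OF assms])

lemma na_power_int: assumes "nonarch_abs av" shows "av (power_int x k) = power_int (av x) k"
  by (simp add: power_int_def na_power[OF assms] na_inverse[OF assms])

lemma na_add_strict: assumes "nonarch_abs av" "av y < av x" shows "av (x + y) = av x"
proof -
  have 1: "av (x + y) \<le> av x" using na_ultra[OF assms(1), of x y] assms(2) by simp
  have "av x \<le> max (av (x + y)) (av y)" using na_diff[OF assms(1), of "x + y" y] by simp
  then have "av x \<le> av (x + y)" using assms(2) by (auto simp: max_def split: if_splits)
  with 1 show ?thesis by simp
qed

lemma na_close: assumes "nonarch_abs av" "av (z - a) < av a" shows "av z = av a"
  using na_add_strict[OF assms(1), of "z - a" a] assms(2) by (simp add: add.commute)

lemma na_add_le: assumes "nonarch_abs av" "av x \<le> e" "av y \<le> e" shows "av (x + y) \<le> e"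
  using na_ultra[OF assms(1), of x y] assms by simp

lemma sf_0: "subfield K \<Longrightarrow> 0 \<in> K" by (simp add: subfield_def)
lemma sf_1: "subfield K \<Longrightarrow> 1 \<in> K" by (simp add: subfield_def)
lemma sf_add: "subfield K \<Longrightarrow> x \<in> K \<Longrightarrow> y \<in> K \<Longrightarrow> x + y \<in> K" by (simp add: subfield_def)
lemma sf_diff: "subfield K \<Longrightarrow> x \<in> K \<Longrightarrow> y \<in> K \<Longrightarrow> x - y \<in> K" by (simp add: subfield_def)
lemma sf_mult: "subfield K \<Longrightarrow> x \<in> K \<Longrightarrow> y \<in> K \<Longrightarrow> x * y \<in> K" by (simp add: subfield_def)
lemma sf_inverse: "subfield K \<Longrightarrow> x \<in> K \<Longrightarrow> inverse x \<in> K" by (simp add: subfield_def)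
lemma sf_divide: "subfield K \<Longrightarrow> x \<in> K \<Longrightarrow> y \<in> K \<Longrightarrow> x / y \<in> K"
  by (simp add: divide_inverse sf_mult sf_inverse)
lemma sf_minus: "subfield K \<Longrightarrow> x \<in> K \<Longrightarrow> - x \<in> K"
  using sf_diff[of K 0 x] sf_0[of K] by simp
lemma sf_power: "subfield K \<Longrightarrow> x \<in> K \<Longrightarrow> x ^ n \<in> K"
  by (induction n) (simp_all add: sf_1 sf_mult)
lemma sf_power_int: "subfield K \<Longrightarrow> x \<in> K \<Longrightarrow> power_int x k \<in> K"
  by (simp add: power_int_def sf_power sf_inverse)

section \<open>Discrete valuation\<close>

lemma powi_le_iff:
  fixes \<rho> :: real assumes "0 < \<rho>" "\<rho> < 1"
  shows "power_int \<rho> a \<le> power_int \<rho> b \<longleftrightarrow> b \<le> a"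
proof
  assume "power_int \<rho> a \<le> power_int \<rho> b"
  then show "b \<le> a" using power_int_strict_decreasing[OF _ assms, of a b] by (metis not_le)
next
  assume "b \<le> a" then show "power_int \<rho> a \<le> power_int \<rho> b"
    using power_int_strict_decreasing[OF _ assms, of b a] by (cases "a = b") auto
qed

lemma powi_less_iff:
  fixes \<rho> :: real assumes "0 < \<rho>" "\<rho> < 1"
  shows "power_int \<rho> a < power_int \<rho> b \<longleftrightarrow> b < a"
  using powi_le_iff[OF assms, of b a] by (simp add: not_le[symmetric])

lemma powi_eq_iff:
  fixes \<rho> :: real assumes "0 < \<rho>" "\<rho> < 1"
  shows "power_int \<rho> a = power_int \<rho> b \<longleftrightarrow> a = b"
  using powi_le_iff[OF assms, of b a] powi_le_iff[OF assms, of a b] by (auto simp: eq_iff)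

lemma val_exists:
  assumes na: "nonarch_abs av" and sf: "subfield F" and u: "uniformizer av F \<pi>"
    and x: "x \<in> F" "x \<noteq> 0"
  shows "\<exists>k::int. av x = power_int (av \<pi>) k"
proof -
  define \<rho> where "\<rho> = av \<pi>"
  have r0: "0 < \<rho>" and r1: "\<rho> < 1" and \<pi>F: "\<pi> \<in> F" and umax: "\<forall>y\<in>F. av y < 1 \<longrightarrow> av y \<le> \<rho>"
    using u by (auto simp: uniformizer_def \<rho>_def)
  have \<pi>0: "\<pi> \<noteq> 0" using r0 unfolding \<rho>_def using na_zero[OF na, of 0] by (metis less_irrefl)
  have ax: "av x > 0" using na_pos[OF na x(2)] .
  define k where "k = \<lfloor>ln (av x) / ln \<rho>\<rfloor>"
  have lnr: "ln \<rho> < 0" using ln_less_zero[OF r0 r1] .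
  have pk: "power_int \<rho> j = exp (real_of_int j * ln \<rho>)" for j
    using r0 powr_real_of_int[of \<rho> j] by (simp add: powr_def power_int_def power_inverse)
  have "real_of_int k \<le> ln (av x) / ln \<rho>" unfolding k_def by linarith
  then have "real_of_int k * ln \<rho> \<ge> ln (av x)" using lnr by (simp add: neg_le_divide_eq)
  then have up: "av x \<le> power_int \<rho> k" unfolding pk using ax by (metis exp_le_cancel_iff exp_ln)
  have "ln (av x) / ln \<rho> < real_of_int k + 1" unfolding k_def by linarith
  then have "(real_of_int k + 1) * ln \<rho> < ln (av x)" using lnr by (simp add: neg_divide_less_eq)
  then have lo: "power_int \<rho> (k + 1) < av x" unfolding pk using ax by (metis exp_less_cancel_iff exp_ln of_int_add of_int_1)
  define y where "y = x * power_int \<pi> (- k)"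
  have yF: "y \<in> F" unfolding y_def using sf x \<pi>F by (simp add: sf_mult sf_power_int)
  have ay: "av y = av x / power_int \<rho> k"
    unfolding y_def using na by (simp add: na_mult na_power_int na_inverse power_int_minus divide_inverse \<rho>_def)
  have pkpos: "power_int \<rho> k > 0" using r0 by simp
  have "av y \<le> 1" using up pkpos ay by simp
  moreover have "av y > \<rho>"
  proof -
    have "power_int \<rho> (k+1) = power_int \<rho> k * \<rho>" using r0 by (simp add: power_int_add)
    then show ?thesis using lo ay pkpos by (simp add: field_simps)
  qed
  ultimately have "av y = 1" using umax yF by (meson not_le order_le_less)
  then have "av x = power_int \<rho> k" using ay pkpos by simp
  then show ?thesis unfolding \<rho>_def by blast
qed



definition pr :: "'c::field vec2 \<Rightarrow> 'c P1" where
  "pr v = (if snd v = 0 then None else Some (fst v / snd v))"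

primrec mpow :: "'c::field mat2 \<Rightarrow> nat \<Rightarrow> 'c mat2" where
  "mpow A 0 = (1, 0, 0, 1)"
| "mpow A (Suc n) = mmult A (mpow A n)"

definition vsc :: "'c::field \<Rightarrow> 'c vec2 \<Rightarrow> 'c vec2" where
  "vsc k v = (k * fst v, k * snd v)"

lemma mobius_pr: "mobius A z = pr (mvec A (P1_vec z))"
  by (cases A; cases z) (auto simp: pr_def)

lemma pr_vsc: "k \<noteq> 0 \<Longrightarrow> pr (vsc k v) = pr v"
  by (auto simp: pr_def vsc_def)

lemma P1vec_pr: assumes "v \<noteq> (0, 0)"
  shows "\<exists>k. k \<noteq> 0 \<and> (k = fst v \<or> k = snd v) \<and> v = vsc k (P1_vec (pr v))"
proof (cases "snd v = 0")
  case True
  then have "fst v \<noteq> 0" using assms by (cases v) auto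
  then show ?thesis using True by (intro exI[of _ "fst v"]) (cases v, auto simp: pr_def vsc_def)
next
  case False
  then show ?thesis by (intro exI[of _ "snd v"]) (cases v, auto simp: pr_def vsc_def)
qed

lemma mvec_nonzero: assumes "mdet A \<noteq> 0" "v \<noteq> (0, 0)" shows "mvec A v \<noteq> (0, 0)"
proof -
  obtain a b c d where A: "A = (a, b, c, d)" by (cases A)
  obtain x y where v: "v = (x, y)" by (cases v)
  show ?thesis
  proof
    assume h: "mvec A v = (0, 0)"
    then have e1: "a * x + b * y = 0" and e2: "c * x + d * y = 0" using A v by auto
    have "(a * d - b * c) * x = d * (a * x + b * y) - b * (c * x + d * y)" by (simp add: algebra_simps)
    then have "x = 0" using e1 e2 assms(1) A by simp
    have "(a * d - b * c) * y = a * (c * x + d * y) - c * (a * x + b * y)" by (simp add: algebra_simps)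
    then have "y = 0" using e1 e2 assms(1) A by simp
    with \<open>x = 0\<close> assms(2) v show False by simp
  qed
qed

lemma P1_vec_nonzero: "P1_vec z \<noteq> (0, 0)" by (cases z) auto

lemma mvec_mult: "mvec (mmult A B) v = mvec A (mvec B v)"
  by (cases A; cases B; cases v) (simp add: algebra_simps)

lemma mvec_vsc: "mvec A (vsc k v) = vsc k (mvec A v)"
  by (cases A; cases v) (simp add: vsc_def algebra_simps)

lemma mdet_mult: "mdet (mmult A B) = mdet A * mdet B"
  by (cases A; cases B) (simp add: algebra_simps)

lemma mobius_mult: assumes "mdet B \<noteq> 0"
  shows "mobius (mmult A B) z = mobius A (mobius B z)"
proof -
  define v where "v = mvec B (P1_vec z)"
  define w where "w = P1_vec (pr v)"
  have nz: "v \<noteq> (0, 0)" unfolding v_def using mvec_nonzero[OF assms P1_vec_nonzero] .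
  obtain k where k: "k \<noteq> 0" "v = vsc k w"
    using P1vec_pr[OF nz] unfolding w_def by blast
  have "mobius A (mobius B z) = pr (mvec A w)"
    by (simp add: mobius_pr w_def v_def)
  also have "\<dots> = pr (vsc k (mvec A w))"
    using k(1) by (simp add: pr_vsc)
  also have "\<dots> = pr (mvec A v)"
    using k(2) by (simp add: mvec_vsc)
  finally show ?thesis by (simp add: mobius_pr mvec_mult v_def)
qed

lemma mvec_msmult: "mvec (msmult k A) v = vsc k (mvec A v)"
  by (cases A; cases v) (simp add: vsc_def algebra_simps)

lemma mobius_smult: "k \<noteq> 0 \<Longrightarrow> mobius (msmult k A) z = mobius A z"
  by (simp add: mobius_pr mvec_msmult pr_vsc)

lemma mdet_smult: "mdet (msmult k A) = k * k * mdet A"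
  by (cases A) (simp add: algebra_simps)

lemma GL2_iff: "(a, b, c, d) \<in> GL2 F \<longleftrightarrow> a \<in> F \<and> b \<in> F \<and> c \<in> F \<and> d \<in> F \<and> a * d - b * c \<noteq> 0"
  by (simp add: GL2_def)

lemma GL2_det: "A \<in> GL2 F \<Longrightarrow> mdet A \<noteq> 0"
  by (cases A) (simp add: GL2_def)

lemma mclass_self: "subfield F \<Longrightarrow> A \<in> mclass F A"
  unfolding mclass_def by (rule CollectI, rule exI[of _ 1]) (cases A, simp add: sf_1)

lemma msmult_GL2: assumes "subfield F" "A \<in> GL2 F" "t \<in> F" "t \<noteq> 0" shows "msmult t A \<in> GL2 F"
proof -
  obtain a b c d where A: "A = (a, b, c, d)" by (cases A)
  have "t * a * (t * d) - t * b * (t * c) = (t * t) * (a * d - b * c)" by (simp add: algebra_simps)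
  then show ?thesis using assms A by (simp add: GL2_def sf_mult)
qed

lemma msmult_msmult: "msmult s (msmult t A) = msmult (s * t) A"
  by (cases A) (simp add: algebra_simps)

lemma msmult_1: "msmult 1 A = A" by (cases A) simp

lemma mclass_mem_eq: assumes sf: "subfield F" and A: "A \<in> GL2 F" and X: "X \<in> mclass F A"
  shows "X \<in> GL2 F \<and> mclass F X = mclass F A"
proof -
  obtain t where t: "t \<in> F" "t \<noteq> 0" "X = msmult t A" using X by (auto simp: mclass_def)
  have "X \<in> GL2 F" using msmult_GL2[OF sf A t(1,2)] t(3) by simp
  moreover have "mclass F X = mclass F A"
  proof
    show "mclass F X \<subseteq> mclass F A"
      unfolding mclass_def t(3) using t sf by (auto simp: msmult_msmult sf_mult)
    show "mclass F A \<subseteq> mclass F X"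
    proof
      fix Y assume "Y \<in> mclass F A"
      then obtain r where r: "r \<in> F" "r \<noteq> 0" "Y = msmult r A" by (auto simp: mclass_def)
      have "Y = msmult (r / t) X" using r t by (simp add: msmult_msmult)
      moreover have "r / t \<in> F" "r / t \<noteq> 0" using r t sf by (auto simp: sf_divide)
      ultimately show "Y \<in> mclass F X" unfolding mclass_def by blast
    qed
  qed
  ultimately show ?thesis by blast
qed

lemma mmult_GL2: assumes sf: "subfield F" and "A \<in> GL2 F" "B \<in> GL2 F" shows "mmult A B \<in> GL2 F"
proof -
  obtain a b c d where A: "A = (a, b, c, d)" by (cases A)
  obtain a' b' c' d' where B: "B = (a', b', c', d')" by (cases B)
  have "mdet (mmult A B) \<noteq> 0" using mdet_mult[of A B] GL2_det[OF assms(2)] GL2_det[OF assms(3)] by simp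
  then show ?thesis using assms A B by (simp add: GL2_def sf_add sf_mult algebra_simps)
qed

lemma mmult_smult: "mmult (msmult s A) (msmult t B) = msmult (s * t) (mmult A B)"
  by (cases A; cases B) (simp add: algebra_simps)

lemma mclass_mult: assumes sf: "subfield F" and A: "A \<in> GL2 F" and B: "B \<in> GL2 F"
  shows "{mmult X Y | X Y. X \<in> mclass F A \<and> Y \<in> mclass F B} = mclass F (mmult A B)"
proof
  show "{mmult X Y | X Y. X \<in> mclass F A \<and> Y \<in> mclass F B} \<subseteq> mclass F (mmult A B)"
  proof
    fix Z assume "Z \<in> {mmult X Y | X Y. X \<in> mclass F A \<and> Y \<in> mclass F B}"
    then obtain s t where st: "s \<in> F" "s \<noteq> 0" "t \<in> F" "t \<noteq> 0" "Z = mmult (msmult s A) (msmult t B)"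
      unfolding mclass_def by blast
    then have "Z = msmult (s * t) (mmult A B)" by (simp add: mmult_smult)
    moreover have "s * t \<in> F" "s * t \<noteq> 0" using st sf by (auto simp: sf_mult)
    ultimately show "Z \<in> mclass F (mmult A B)" unfolding mclass_def by blast
  qed
  show "mclass F (mmult A B) \<subseteq> {mmult X Y | X Y. X \<in> mclass F A \<and> Y \<in> mclass F B}"
  proof
    fix Z assume "Z \<in> mclass F (mmult A B)"
    then obtain t where t: "t \<in> F" "t \<noteq> 0" "Z = msmult t (mmult A B)" by (auto simp: mclass_def)
    have "Z = mmult (msmult t A) (msmult 1 B)" using t by (simp add: mmult_smult)
    moreover have "msmult t A \<in> mclass F A" "msmult 1 B \<in> mclass F B"
      using t sf by (auto simp: mclass_def sf_1)
    ultimately show "Z \<in> {mmult X Y | X Y. X \<in> mclass F A \<and> Y \<in> mclass F B}" by blast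
  qed
qed

definition rep :: "'c::field mat2 set \<Rightarrow> 'c mat2" where
  "rep g = (SOME A. A \<in> g)"

lemma rep_prop: assumes "g \<in> PGL2_S S F" "s \<in> S" "subfield (F s)"
  shows "rep (g s) \<in> GL2 (F s) \<and> g s = mclass (F s) (rep (g s))"
proof -
  obtain A where A: "A \<in> GL2 (F s)" "g s = mclass (F s) A" using assms by (auto simp: PGL2_S_def)
  have "A \<in> g s" using A mclass_self[OF assms(3)] by simp
  then have "rep (g s) \<in> g s" unfolding rep_def by (rule someI)
  then show ?thesis using mclass_mem_eq[OF assms(3) A(1)] A(2) by simp
qed

lemma pgl_act_rep: "pgl_act g z = mobius (rep g) z"
  by (simp add: pgl_act_def rep_def)

lemma pgl_act_vertex_rep: "pgl_act_vertex g v = (\<lambda>L. mvec (rep g) ` L) ` v"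
  by (simp add: pgl_act_vertex_def rep_def)

lemma mobius_class: assumes sf: "subfield F" and A: "A \<in> GL2 F" and X: "X \<in> mclass F A"
  shows "mobius X z = mobius A z"
proof -
  obtain t where t: "t \<in> F" "t \<noteq> 0" "X = msmult t A" using X by (auto simp: mclass_def)
  then show ?thesis by (simp add: mobius_smult)
qed

lemma pgl_mult_S: assumes "g \<in> PGL2_S S F" "h \<in> PGL2_S S F" "s \<in> S" "subfield (F s)"
  shows "pgl_mult g h s = mclass (F s) (mmult (rep (g s)) (rep (h s)))"
proof -
  have A: "rep (g s) \<in> GL2 (F s)" "g s = mclass (F s) (rep (g s))" using rep_prop[OF assms(1,3,4)] by auto
  have B: "rep (h s) \<in> GL2 (F s)" "h s = mclass (F s) (rep (h s))" using rep_prop[OF assms(2,3,4)] by auto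
  have "pgl_mult g h s = {mmult X Y | X Y. X \<in> g s \<and> Y \<in> h s}" by (simp add: pgl_mult_def)
  also have "\<dots> = mclass (F s) (mmult (rep (g s)) (rep (h s)))"
    using mclass_mult[OF assms(4) A(1) B(1)] A(2) B(2) by simp
  finally show ?thesis .
qed

lemma pgl_act_mult: assumes "g \<in> PGL2_S S F" "h \<in> PGL2_S S F" "s \<in> S" "subfield (F s)"
  shows "pgl_act (pgl_mult g h s) z = pgl_act (g s) (pgl_act (h s) z)"
proof -
  let ?A = "rep (g s)" and ?B = "rep (h s)"
  have A: "?A \<in> GL2 (F s)" and B: "?B \<in> GL2 (F s)"
    using rep_prop[OF assms(1,3,4)] rep_prop[OF assms(2,3,4)] by auto
  have AB: "mmult ?A ?B \<in> GL2 (F s)" using mmult_GL2[OF assms(4) A B] .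
  have e: "pgl_mult g h s = mclass (F s) (mmult ?A ?B)" using pgl_mult_S[OF assms] .
  have "rep (pgl_mult g h s) \<in> pgl_mult g h s"
    unfolding rep_def e by (rule someI, rule mclass_self[OF assms(4)])
  then have "mobius (rep (pgl_mult g h s)) z = mobius (mmult ?A ?B) z"
    using mobius_class[OF assms(4) AB] e by simp
  also have "\<dots> = mobius ?A (mobius ?B z)" using mobius_mult GL2_det[OF B] by blast
  finally show ?thesis by (simp add: pgl_act_rep)
qed

lemma pgl_pow_S: assumes "g \<in> PGL2_S S F" "s \<in> S" "subfield (F s)"
  shows "pgl_pow S F g n s = mclass (F s) (mpow (rep (g s)) n) \<and> mpow (rep (g s)) n \<in> GL2 (F s)"
proof (induction n)
  case 0
  have "(1, 0, 0, 1) \<in> GL2 (F s)" using assms(3) by (simp add: GL2_def sf_0 sf_1)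
  then show ?case using assms(2) by (simp add: pgl_one_def)
next
  case (Suc n)
  have A: "rep (g s) \<in> GL2 (F s)" and gs: "g s = mclass (F s) (rep (g s))" using rep_prop[OF assms] by auto
  have "pgl_pow S F g (Suc n) s = {mmult X Y | X Y. X \<in> g s \<and> Y \<in> pgl_pow S F g n s}"
    by (simp add: pgl_mult_def)
  also have "\<dots> = mclass (F s) (mmult (rep (g s)) (mpow (rep (g s)) n))"
    using mclass_mult[OF assms(3) A] Suc gs by simp
  finally show ?case using mmult_GL2[OF assms(3) A] Suc by simp
qed

lemma finite_order_mpow: assumes "g \<in> PGL2_S S F" "s \<in> S" "subfield (F s)" "finite_order S F g"
  shows "\<exists>n c. n > 0 \<and> c \<noteq> 0 \<and> mpow (rep (g s)) n = (c, 0, 0, c)"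
proof -
  obtain n where n: "n > 0" "pgl_pow S F g n = pgl_one S F" using assms(4) by (auto simp: finite_order_def)
  have "mpow (rep (g s)) n \<in> pgl_pow S F g n s"
    using pgl_pow_S[OF assms(1-3)] mclass_self[OF assms(3)] by simp
  then have "mpow (rep (g s)) n \<in> mclass (F s) (1, 0, 0, 1)" using n(2) assms(2) by (simp add: pgl_one_def)
  then obtain t where "t \<noteq> 0" "mpow (rep (g s)) n = (t, 0, 0, t)" by (auto simp: mclass_def)
  then show ?thesis using n(1) by blast
qed

lemma mpow_eigen: "mvec A v = vsc r v \<Longrightarrow> mvec (mpow A n) v = vsc (r ^ n) v"
proof (induction n)
  case 0 then show ?case by (cases v) (simp add: vsc_def)
next
  case (Suc n)
  then show ?case by (simp add: mvec_mult mvec_vsc) (simp add: vsc_def)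
qed

lemma eigen_pow: assumes "mvec A v = vsc r v" "v \<noteq> (0, 0)" "mpow A n = (c, 0, 0, c)"
  shows "r ^ n = c"
proof -
  have "mvec (mpow A n) v = vsc c v" using assms(3) by (cases v) (simp add: vsc_def)
  then have "vsc (r ^ n) v = vsc c v" using mpow_eigen[OF assms(1), of n] by simp
  then have e: "(r ^ n - c) * fst v = 0" "(r ^ n - c) * snd v = 0" by (simp_all add: vsc_def algebra_simps)
  show ?thesis
  proof (rule ccontr)
    assume "r ^ n \<noteq> c"
    then have "fst v = 0" "snd v = 0" using e by auto
    then show False using assms(2) by (cases v) auto
  qed
qed

lemma mmult_assoc: "mmult (mmult A B) C = mmult A (mmult B C)"
  by (cases A; cases B; cases C) (simp add: algebra_simps)

lemma mmult_minv_left: assumes "mdet A \<noteq> 0" shows "mmult (minv A) A = (1, 0, 0, 1)"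
proof -
  obtain a b c d where A: "A = (a, b, c, d)" by (cases A)
  define e where "e = a * d - b * c"
  have e: "e \<noteq> 0" using assms A e_def by simp
  have "d / e * a + - b / e * c = (a * d - b * c) / e" by (simp add: diff_divide_distrib[symmetric] algebra_simps)
  then have 1: "d / e * a + - b / e * c = 1" using e unfolding e_def by simp
  have 2: "d / e * b + - b / e * d = 0" by (simp add: field_simps)
  have 3: "- c / e * a + a / e * c = 0" by (simp add: field_simps)
  have "- c / e * b + a / e * d = (a * d - b * c) / e" by (simp add: diff_divide_distrib[symmetric] algebra_simps)
  then have 4: "- c / e * b + a / e * d = 1" using e unfolding e_def by simp
  show ?thesis using 1 2 3 4 A by (simp add: Let_def e_def)
qed

lemma mmult_id_left: "mmult (1, 0, 0, 1) A = A"
  by (cases A) simp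

lemma mmult_msmult_right: "mmult A (msmult t B) = msmult t (mmult A B)"
  by (cases A; cases B) (simp add: algebra_simps)

lemma pgl_mult_cancel: assumes "g \<in> PGL2_S S F" "h \<in> PGL2_S S F" "h' \<in> PGL2_S S F"
  and sf: "\<forall>s\<in>S. subfield (F s)" and eq: "pgl_mult g h = pgl_mult g h'"
  shows "h = h'"
proof
  fix s
  show "h s = h' s"
  proof (cases "s \<in> S")
    case False then show ?thesis using assms(2,3) by (simp add: PGL2_S_def)
  next
    case True
    let ?A = "rep (g s)" and ?B = "rep (h s)" and ?B' = "rep (h' s)"
    have sfs: "subfield (F s)" using sf True by simp
    note rA = rep_prop[OF assms(1) True sfs] and rB = rep_prop[OF assms(2) True sfs]
      and rB' = rep_prop[OF assms(3) True sfs]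
    have "mclass (F s) (mmult ?A ?B) = mclass (F s) (mmult ?A ?B')"
      using pgl_mult_S[OF assms(1,2) True sfs] pgl_mult_S[OF assms(1,3) True sfs] eq by simp
    then have "mmult ?A ?B' \<in> mclass (F s) (mmult ?A ?B)" using mclass_self[OF sfs] by blast
    then obtain t where t: "t \<in> F s" "t \<noteq> 0" "mmult ?A ?B' = msmult t (mmult ?A ?B)"
      by (auto simp: mclass_def)
    have mi: "mmult (minv ?A) ?A = (1, 0, 0, 1)" using mmult_minv_left[OF GL2_det[OF conjunct1[OF rA]]] .
    have "?B' = mmult (minv ?A) (mmult ?A ?B')" using mi
      by (simp add: mmult_assoc[symmetric] mmult_id_left)
    also have "\<dots> = msmult t ?B" using t(3) mi
      by (simp add: mmult_msmult_right mmult_assoc[symmetric] mmult_id_left)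
    finally have "?B' = msmult t ?B" .
    then have "?B' \<in> mclass (F s) ?B" using t by (auto simp: mclass_def)
    then show ?thesis using mclass_mem_eq[OF sfs, of ?B ?B'] rB rB' by simp
  qed
qed



definition mcont :: "('c::field \<Rightarrow> real) \<Rightarrow> 'c mat2 \<Rightarrow> bool" where
  "mcont av M \<longleftrightarrow> (\<forall>X x. P1_conv av X x \<longrightarrow> P1_conv av (\<lambda>n. mobius M (X n)) (mobius M x))"

lemma mcont_mult: assumes "mdet B \<noteq> 0" "mcont av A" "mcont av B" shows "mcont av (mmult A B)"
  using assms unfolding mcont_def by (simp add: mobius_mult)

lemma mcont_smult: assumes "k \<noteq> 0" "mcont av A" shows "mcont av (msmult k A)"
  using assms unfolding mcont_def by (simp add: mobius_smult)

lemma mcont_trans: assumes na: "nonarch_abs av" shows "mcont av (1, b, 0, 1)"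
  unfolding mcont_def
proof (intro allI impI)
  fix X x assume h: "P1_conv av X x"
  show "P1_conv av (\<lambda>n. mobius (1, b, 0, 1) (X n)) (mobius (1, b, 0, 1) x)"
  proof (cases x)
    case None
    show ?thesis unfolding None P1_conv_def
    proof (simp, intro allI)
      fix M :: real
      have H: "\<forall>M. eventually (\<lambda>n. X n = None \<or> (\<exists>z. X n = Some z \<and> av z > M)) sequentially"
        using h None by (simp add: P1_conv_def)
      have "eventually (\<lambda>n. X n = None \<or> (\<exists>z. X n = Some z \<and> av z > max M (av b))) sequentially"
        using H[rule_format, of "max M (av b)"] .
      then show "eventually (\<lambda>n. mobius (1, b, 0, 1) (X n) = None \<or>
          (\<exists>z. mobius (1, b, 0, 1) (X n) = Some z \<and> M < av z)) sequentially"
      proof (rule eventually_mono)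
        fix n assume "X n = None \<or> (\<exists>z. X n = Some z \<and> av z > max M (av b))"
        then show "mobius (1, b, 0, 1) (X n) = None \<or> (\<exists>z. mobius (1, b, 0, 1) (X n) = Some z \<and> M < av z)"
        proof
          assume "X n = None" then show ?thesis by simp
        next
          assume "\<exists>z. X n = Some z \<and> av z > max M (av b)"
          then obtain z where z: "X n = Some z" "av z > max M (av b)" by blast
          have "av (z + b) = av z" using na_add_strict[OF na, of b z] z(2) by simp
          then show ?thesis using z by simp
        qed
      qed
    qed
  next
    case (Some a)
    show ?thesis unfolding Some P1_conv_def
    proof (simp, intro allI impI)
      fix e :: real assume e: "e > 0"
      have "eventually (\<lambda>n. \<exists>z. X n = Some z \<and> av (z - a) < e) sequentially"
        using h Some e by (simp add: P1_conv_def)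
      then show "eventually (\<lambda>n. \<exists>z. mobius (1, b, 0, 1) (X n) = Some z \<and> av (z - (a + b)) < e) sequentially"
        by (rule eventually_mono) (auto simp: algebra_simps)
    qed
  qed
qed

lemma mcont_scale: assumes na: "nonarch_abs av" and k: "k \<noteq> 0" shows "mcont av (k, 0, 0, 1)"
  unfolding mcont_def
proof (intro allI impI)
  fix X x assume h: "P1_conv av X x"
  have ak: "av k > 0" using na_pos[OF na k] .
  show "P1_conv av (\<lambda>n. mobius (k, 0, 0, 1) (X n)) (mobius (k, 0, 0, 1) x)"
  proof (cases x)
    case None
    show ?thesis unfolding None P1_conv_def
    proof (simp, intro allI)
      fix M :: real
      have "eventually (\<lambda>n. X n = None \<or> (\<exists>z. X n = Some z \<and> av z > M / av k)) sequentially"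
        using h None by (simp add: P1_conv_def)
      then show "eventually (\<lambda>n. mobius (k, 0, 0, 1) (X n) = None \<or>
          (\<exists>z. mobius (k, 0, 0, 1) (X n) = Some z \<and> M < av z)) sequentially"
      proof (rule eventually_mono)
        fix n assume "X n = None \<or> (\<exists>z. X n = Some z \<and> av z > M / av k)"
        then show "mobius (k, 0, 0, 1) (X n) = None \<or> (\<exists>z. mobius (k, 0, 0, 1) (X n) = Some z \<and> M < av z)"
        proof
          assume "X n = None" then show ?thesis by simp
        next
          assume "\<exists>z. X n = Some z \<and> av z > M / av k"
          then obtain z where z: "X n = Some z" "av z > M / av k" by blast
          have "av (k * z) = av k * av z" using na_mult[OF na] .
          moreover have "av k * av z > M" using z(2) ak by (simp add: field_simps)
          ultimately show ?thesis using z by simp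
        qed
      qed
    qed
  next
    case (Some a)
    show ?thesis unfolding Some P1_conv_def
    proof (simp, intro allI impI)
      fix e :: real assume e: "e > 0"
      have "eventually (\<lambda>n. \<exists>z. X n = Some z \<and> av (z - a) < e / av k) sequentially"
        using h Some e ak by (simp add: P1_conv_def)
      then show "eventually (\<lambda>n. \<exists>z. mobius (k, 0, 0, 1) (X n) = Some z \<and> av (z - k * a) < e) sequentially"
      proof (rule eventually_mono)
        fix n assume "\<exists>z. X n = Some z \<and> av (z - a) < e / av k"
        then obtain z where z: "X n = Some z" "av (z - a) < e / av k" by blast
        have "av (k * z - k * a) = av k * av (z - a)" using na_mult[OF na, of k "z - a"] by (simp add: algebra_simps)
        moreover have "av k * av (z - a) < e" using z(2) ak by (simp add: field_simps)
        ultimately show "\<exists>w. mobius (k, 0, 0, 1) (X n) = Some w \<and> av (w - k * a) < e" using z(1) by simp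
      qed
    qed
  qed
qed

lemma mobius_J_None: "mobius (0, 1, 1, 0) None = Some 0" by simp
lemma mobius_J_Some: "mobius (0, 1, 1, 0) (Some z) = (if z = 0 then None else Some (inverse z))"
  by (simp add: divide_inverse)

lemma mcont_inv: assumes na: "nonarch_abs av" shows "mcont av (0, 1, 1, 0)"
  unfolding mcont_def
proof (intro allI impI)
  fix X x assume h: "P1_conv av X x"
  show "P1_conv av (\<lambda>n. mobius (0, 1, 1, 0) (X n)) (mobius (0, 1, 1, 0) x)"
  proof (cases x)
    case None
    show ?thesis unfolding None mobius_J_None P1_conv_def
    proof (simp only: option.case, intro allI impI)
      fix e :: real assume e: "e > 0"
      have "eventually (\<lambda>n. X n = None \<or> (\<exists>z. X n = Some z \<and> av z > inverse e)) sequentially"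
        using h None by (simp add: P1_conv_def)
      then show "eventually (\<lambda>n. \<exists>z. mobius (0, 1, 1, 0) (X n) = Some z \<and> av (z - 0) < e) sequentially"
      proof (rule eventually_mono)
        fix n assume "X n = None \<or> (\<exists>z. X n = Some z \<and> av z > inverse e)"
        then show "\<exists>z. mobius (0, 1, 1, 0) (X n) = Some z \<and> av (z - 0) < e"
        proof
          assume "X n = None" then show ?thesis using e na_zero[OF na, of 0] by simp
        next
          assume "\<exists>z. X n = Some z \<and> av z > inverse e"
          then obtain z where z: "X n = Some z" "av z > inverse e" by blast
          have az: "av z > 0" using z(2) e by (meson inverse_positive_iff_positive less_trans)
          then have z0: "z \<noteq> 0" using na_zero[OF na, of 0] by auto
          have "av (inverse z) = inverse (av z)" using na_inverse[OF na] .
          moreover have "inverse (av z) < e" using z(2) e az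
            by (metis inverse_inverse_eq inverse_less_iff_less inverse_positive_iff_positive)
          ultimately show ?thesis using z(1) z0 by (simp add: mobius_J_Some na_divide[OF na] na_one[OF na] inverse_eq_divide)
        qed
      qed
    qed
  next
    case (Some a)
    show ?thesis
    proof (cases "a = 0")
      case True
      show ?thesis unfolding Some True mobius_J_Some P1_conv_def
      proof (simp only: simp_thms if_True option.case, intro allI)
        fix M :: real
        define e where "e = inverse (max M 1)"
        have e: "e > 0" unfolding e_def by simp
        have "eventually (\<lambda>n. \<exists>z. X n = Some z \<and> av (z - 0) < e) sequentially"
          using h Some True e by (simp add: P1_conv_def)
        then show "eventually (\<lambda>n. mobius (0, 1, 1, 0) (X n) = None \<or>
            (\<exists>z. mobius (0, 1, 1, 0) (X n) = Some z \<and> M < av z)) sequentially"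
        proof (rule eventually_mono)
          fix n assume "\<exists>z. X n = Some z \<and> av (z - 0) < e"
          then obtain z where z: "X n = Some z" "av z < e" by auto
          show "mobius (0, 1, 1, 0) (X n) = None \<or> (\<exists>z. mobius (0, 1, 1, 0) (X n) = Some z \<and> M < av z)"
          proof (cases "z = 0")
            case True then show ?thesis using z by simp
          next
            case False
            have az: "av z > 0" using na_pos[OF na False] .
            have "av (inverse z) = inverse (av z)" using na_inverse[OF na] .
            moreover have "inverse (av z) > max M 1" using z(2) az unfolding e_def
              by (metis inverse_inverse_eq inverse_less_iff_less inverse_positive_iff_positive max.strict_coboundedI2 zero_less_one)
            ultimately show ?thesis using z(1) False by (simp add: mobius_J_Some na_divide[OF na] na_one[OF na] inverse_eq_divide)
          qed
        qed
      qed
    next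
      case False
      have aa: "av a > 0" using na_pos[OF na False] .
      show ?thesis unfolding Some mobius_J_Some P1_conv_def
      proof (simp only: False if_False option.case, intro allI impI)
        fix e :: real assume e: "e > 0"
        define e' where "e' = min (av a) (e * av a * av a)"
        have e': "e' > 0" unfolding e'_def using e aa by simp
        have "eventually (\<lambda>n. \<exists>z. X n = Some z \<and> av (z - a) < e') sequentially"
          using h Some e' by (simp add: P1_conv_def)
        then show "eventually (\<lambda>n. \<exists>w. mobius (0, 1, 1, 0) (X n) = Some w \<and> av (w - inverse a) < e) sequentially"
        proof (rule eventually_mono)
          fix n assume "\<exists>z. X n = Some z \<and> av (z - a) < e'"
          then obtain z where z: "X n = Some z" "av (z - a) < e'" by blast
          have "av (z - a) < av a" using z(2) unfolding e'_def by simp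
          then have za: "av z = av a" using na_close[OF na] by blast
          then have z0: "z \<noteq> 0" using aa na_zero[OF na, of 0] by auto
          have "inverse z - inverse a = (a - z) / (z * a)" using z0 False by (simp add: field_simps)
          then have "av (inverse z - inverse a) = av (z - a) / (av a * av a)"
            using za by (simp add: na_divide[OF na] na_mult[OF na] na_diff_comm[OF na, of a z])
          also have "\<dots> < e"
          proof -
            have "av (z - a) < e * av a * av a" using z(2) unfolding e'_def by simp
            then show ?thesis using aa by (simp add: field_simps)
          qed
          finally show "\<exists>w. mobius (0, 1, 1, 0) (X n) = Some w \<and> av (w - inverse a) < e"
            using z(1) z0 by (simp add: mobius_J_Some inverse_eq_divide)
        qed
      qed
    qed
  qed
qed

lemma mcont_all: assumes na: "nonarch_abs av" and det: "mdet M \<noteq> 0" shows "mcont av M"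
proof -
  obtain a b c d where M: "M = (a, b, c, d)" by (cases M)
  have D: "a * d - b * c \<noteq> 0" using det M by simp
  show ?thesis
  proof (cases "c = 0")
    case True
    then have d0: "d \<noteq> 0" and a0: "a \<noteq> 0" using D by auto
    have "msmult d (mmult (1, b / d, 0, 1) (a / d, 0, 0, 1)) = (a, b, 0, d)" using d0 by simp
    then have Me: "M = msmult d (mmult (1, b / d, 0, 1) (a / d, 0, 0, 1))" using M True by simp
    have "mcont av (mmult (1, b / d, 0, 1) (a / d, 0, 0, 1))"
      by (rule mcont_mult) (use a0 d0 mcont_trans[OF na] mcont_scale[OF na] in auto)
    then have "mcont av (msmult d (mmult (1, b / d, 0, 1) (a / d, 0, 0, 1)))" by (rule mcont_smult[OF d0])
    then show ?thesis unfolding Me .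
  next
    case False
    define e where "e = - (a * d - b * c) / c"
    have e0: "e \<noteq> 0" using D False unfolding e_def by simp
    have "M = mmult (1, a / c, 0, 1) (mmult (e, 0, 0, 1) (mmult (0, 1, 1, 0) (mmult (1, d, 0, 1) (c, 0, 0, 1))))"
      using M False unfolding e_def by (simp add: field_simps)
    moreover have "mcont av (mmult (1, a / c, 0, 1) (mmult (e, 0, 0, 1) (mmult (0, 1, 1, 0) (mmult (1, d, 0, 1) (c, 0, 0, 1)))))"
    proof -
      have 1: "mcont av (mmult (1, d, 0, 1) (c, 0, 0, 1))"
        by (rule mcont_mult) (use False mcont_trans[OF na] mcont_scale[OF na] in auto)
      have 2: "mcont av (mmult (0, 1, 1, 0) (mmult (1, d, 0, 1) (c, 0, 0, 1)))"
        by (rule mcont_mult) (use False 1 mcont_inv[OF na] in auto)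
      have 3: "mcont av (mmult (e, 0, 0, 1) (mmult (0, 1, 1, 0) (mmult (1, d, 0, 1) (c, 0, 0, 1))))"
        by (rule mcont_mult) (use False 2 e0 mcont_scale[OF na] in auto)
      show ?thesis
        by (rule mcont_mult) (use False 3 e0 mcont_trans[OF na] in auto)
    qed
    ultimately show ?thesis by simp
  qed
qed


lemma exists_not_in:
  assumes na: "nonarch_abs av" and ac: "alg_closed_field TYPE('c::field)" and sf: "subfield (F::'c set)"
    and u: "uniformizer av F \<pi>"
  shows "\<exists>\<zeta>. \<zeta> \<notin> F"
proof -
  have "degree [:-\<pi>, 0, 1:] > 0" by simp
  then obtain z where "poly [:-\<pi>, 0, 1:] z = 0" using ac unfolding alg_closed_field_def by blast
  then have zz: "z * z = \<pi>" by (simp add: algebra_simps)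
  have r: "0 < av \<pi>" "av \<pi> < 1" "\<forall>y\<in>F. av y < 1 \<longrightarrow> av y \<le> av \<pi>" using u by (auto simp: uniformizer_def)
  have az: "av z * av z = av \<pi>" using zz na_mult[OF na, of z z] by simp
  have az0: "av z \<ge> 0" using na_nonneg[OF na] .
  have "av z < 1"
  proof (rule ccontr)
    assume "\<not> av z < 1"
    then have "av z * av z \<ge> 1 * 1" using mult_mono[of 1 "av z" 1 "av z"] by simp
    then show False using az r by simp
  qed
  have "z \<notin> F"
  proof
    assume "z \<in> F"
    then have "av z \<le> av \<pi>" using r(3) \<open>av z < 1\<close> by blast
    then have "av z \<le> av z * av z" using az by simp
    moreover have "av z > 0" using az r(1) az0 by (metis less_eq_real_def mult_zero_left)
    ultimately have "1 \<le> av z" by simp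
    then show False using \<open>av z < 1\<close> by simp
  qed
  then show ?thesis by blast
qed

lemma mobius_out:
  assumes sf: "subfield F" and A: "A \<in> GL2 F" and z: "\<zeta> \<notin> F"
  shows "mobius A (Some \<zeta>) \<notin> P1_of F"
proof -
  obtain a b c d where Ad: "A = (a, b, c, d)" by (cases A)
  have F: "a \<in> F" "b \<in> F" "c \<in> F" "d \<in> F" and D: "a * d - b * c \<noteq> 0" using A Ad by (auto simp: GL2_def)
  show ?thesis
  proof (cases "c * \<zeta> + d = 0")
    case True
    have "c \<noteq> 0" using True D by auto
    then have "\<zeta> = - d / c" using True by (simp add: field_simps add_eq_0_iff)
    then have "\<zeta> \<in> F" using F sf by (simp add: sf_divide sf_minus)
    then show ?thesis using z by simp
  next
    case False
    have "(a * \<zeta> + b) / (c * \<zeta> + d) \<notin> F"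
    proof
      assume yF: "(a * \<zeta> + b) / (c * \<zeta> + d) \<in> F"
      define y where "y = (a * \<zeta> + b) / (c * \<zeta> + d)"
      have e: "\<zeta> * (c * y - a) = b - d * y" using False unfolding y_def by (simp add: field_simps)
      show False
      proof (cases "c * y - a = 0")
        case True
        then have "b - d * y = 0" using e by simp
        then have "a * d - b * c = 0" using True by (simp add: algebra_simps)
        then show False using D by simp
      next
        case False
        then have "\<zeta> = (b - d * y) / (c * y - a)" using e by (simp add: field_simps)
        moreover have "y \<in> F" using yF y_def by simp
        ultimately have "\<zeta> \<in> F" using F sf by (simp add: sf_divide sf_diff sf_mult)
        then show False using z by simp
      qed
    qed
    then show ?thesis using False Ad by (auto simp: P1_of_def)
  qed
qed

lemma local_sf: "local_field av F \<Longrightarrow> subfield F" by (simp add: local_field_def)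

lemma Lp_invariant:
  fixes F :: "'s \<Rightarrow> 'c::field set"
  assumes na: "nonarch_abs av" and ac: "alg_closed_field TYPE('c::field)"
    and loc: "\<forall>s\<in>S. local_field av (F s)"
    and sub: "pgl_subgroup S F \<Gamma>"
    and pl: "plectic_semisimple_with av S F \<Gamma> Lp"
    and g: "g \<in> \<Gamma>" and s: "s \<in> S" and l: "l \<in> Lp s"
  shows "pgl_act (g s) l \<in> Lp s"
proof -
  have sf: "\<forall>t\<in>S. subfield (F t)" using loc local_sf by blast
  have GP: "\<Gamma> \<subseteq> PGL2_S S F" using sub by (simp add: pgl_subgroup_def)
  have "\<forall>t\<in>S. \<exists>\<zeta>. \<zeta> \<notin> F t"
  proof
    fix t assume t: "t \<in> S"
    obtain \<pi> where "uniformizer av (F t) \<pi>" using loc t by (auto simp: local_field_def)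
    then show "\<exists>\<zeta>. \<zeta> \<notin> F t" using exists_not_in[of av "F t" \<pi>] na ac sf t by blast
  qed
  then obtain \<zeta> where \<zeta>: "\<forall>t\<in>S. \<zeta> t \<notin> F t" by metis
  define x where "x = (\<lambda>t. if t = s then l else if t \<in> S then Some (\<zeta> t) else None)"
  have xPS: "x \<in> PS S" using s unfolding x_def PS_def by auto
  have LS: "limit_set av S \<Gamma> = {x \<in> PS S. \<exists>s\<in>S. x s \<in> Lp s}" using pl by (simp add: plectic_semisimple_with_def)
  have "x \<in> limit_set av S \<Gamma>" unfolding LS using xPS s l by (auto simp: x_def)
  then obtain y \<delta> where y: "y \<in> PS S" and inj: "inj \<delta>" and rg: "range \<delta> \<subseteq> \<Gamma>"
    and cv: "\<forall>t\<in>S. P1_conv av (\<lambda>j. pgl_act (\<delta> j t) (y t)) (x t)"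
    unfolding limit_set_def by blast
  define \<delta>' where "\<delta>' = (\<lambda>j. pgl_mult g (\<delta> j))"
  define x' where "x' = (\<lambda>t. if t \<in> S then pgl_act (g t) (x t) else None)"
  have gP: "g \<in> PGL2_S S F" using g GP by blast
  have dP: "\<delta> j \<in> PGL2_S S F" for j using rg GP by blast
  have "x' \<in> limit_set av S \<Gamma>"
    unfolding limit_set_def
  proof (intro CollectI conjI bexI exI)
    show "x' \<in> PS S" unfolding x'_def PS_def by auto
    show "y \<in> PS S" by (rule y)
    show "inj \<delta>'"
    proof (rule injI)
      fix i j assume "\<delta>' i = \<delta>' j"
      then have "\<delta> i = \<delta> j" using pgl_mult_cancel[OF gP dP dP sf] unfolding \<delta>'_def by blast
      then show "i = j" using inj by (simp add: inj_eq)
    qed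
    show "range \<delta>' \<subseteq> \<Gamma>" using sub g rg unfolding \<delta>'_def pgl_subgroup_def by auto
    show "\<forall>t\<in>S. P1_conv av (\<lambda>j. pgl_act (\<delta>' j t) (y t)) (x' t)"
    proof
      fix t assume t: "t \<in> S"
      have e: "pgl_act (\<delta>' j t) (y t) = mobius (rep (g t)) (pgl_act (\<delta> j t) (y t))" for j
        unfolding \<delta>'_def using pgl_act_mult[OF gP dP t] sf t by (simp add: pgl_act_rep)
      have "mcont av (rep (g t))" using mcont_all[OF na GL2_det] rep_prop[OF gP t] sf t by blast
      then have "P1_conv av (\<lambda>j. mobius (rep (g t)) (pgl_act (\<delta> j t) (y t))) (mobius (rep (g t)) (x t))"
        using cv t unfolding mcont_def by blast
      then show "P1_conv av (\<lambda>j. pgl_act (\<delta>' j t) (y t)) (x' t)"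
        unfolding e x'_def using t by (simp add: pgl_act_rep)
    qed
  qed
  then obtain t where t: "t \<in> S" "x' t \<in> Lp t" unfolding LS by blast
  have LpF: "Lp t \<subseteq> P1_of (F t)" using pl t by (simp add: plectic_semisimple_with_def)
  show ?thesis
  proof (cases "t = s")
    case True then show ?thesis using t by (simp add: x'_def x_def)
  next
    case False
    have "x' t = mobius (rep (g t)) (Some (\<zeta> t))" using t(1) False by (simp add: x'_def x_def pgl_act_rep)
    moreover have "mobius (rep (g t)) (Some (\<zeta> t)) \<notin> P1_of (F t)"
      using mobius_out[of "F t" "rep (g t)" "\<zeta> t"] rep_prop[OF gP t(1)] sf \<zeta> t(1) by blast
    ultimately show ?thesis using t LpF by (metis subsetD)
  qed
qed



definition lc :: "'c::field \<Rightarrow> 'c vec2 \<Rightarrow> 'c \<Rightarrow> 'c vec2 \<Rightarrow> 'c vec2" where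
  "lc a u b w = (a * fst u + b * fst w, a * snd u + b * snd w)"

definition vdet :: "'c::field vec2 \<Rightarrow> 'c vec2 \<Rightarrow> 'c" where
  "vdet u w = fst u * snd w - snd u * fst w"

definition inF :: "'c set \<Rightarrow> 'c vec2 \<Rightarrow> bool" where
  "inF F v \<longleftrightarrow> fst v \<in> F \<and> snd v \<in> F"

lemma span_lc: "lattice_span av F u w = {lc a u b w | a b. a \<in> valring av F \<and> b \<in> valring av F}"
  by (simp add: lattice_span_def lc_def)

lemma valring_iff: "x \<in> valring av F \<longleftrightarrow> x \<in> F \<and> av x \<le> 1" by (simp add: valring_def)

lemma vr_add: "nonarch_abs av \<Longrightarrow> subfield F \<Longrightarrow> x \<in> valring av F \<Longrightarrow> y \<in> valring av F \<Longrightarrow> x + y \<in> valring av F"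
  by (simp add: valring_iff sf_add na_add_le)

lemma vr_mult: assumes "nonarch_abs av" "subfield F" "x \<in> valring av F" "y \<in> valring av F" shows "x * y \<in> valring av F"
proof -
  have "av x * av y \<le> 1 * 1" using assms by (intro mult_mono) (auto simp: valring_iff na_nonneg)
  then show ?thesis using assms by (simp add: valring_iff sf_mult na_mult)
qed

lemma lc_lc: "lc a (lc a1 x c1 y) b (lc b1 x d1 y) = lc (a * a1 + b * b1) x (a * c1 + b * d1) y"
  by (simp add: lc_def algebra_simps)

lemma span_sub:
  assumes na: "nonarch_abs av" and sf: "subfield F"
    and x': "x' = lc a1 x c1 y" and y': "y' = lc b1 x d1 y"
    and O: "a1 \<in> valring av F" "b1 \<in> valring av F" "c1 \<in> valring av F" "d1 \<in> valring av F"
  shows "lattice_span av F x' y' \<subseteq> lattice_span av F x y"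
proof
  fix z assume "z \<in> lattice_span av F x' y'"
  then obtain a b where ab: "a \<in> valring av F" "b \<in> valring av F" "z = lc a x' b y'" by (auto simp: span_lc)
  have "z = lc (a * a1 + b * b1) x (a * c1 + b * d1) y" using ab x' y' by (simp add: lc_lc)
  moreover have "a * a1 + b * b1 \<in> valring av F" "a * c1 + b * d1 \<in> valring av F"
    using ab O na sf by (auto intro!: vr_add vr_mult)
  ultimately show "z \<in> lattice_span av F x y" by (auto simp: span_lc)
qed

lemma span_change:
  assumes na: "nonarch_abs av" and sf: "subfield F"
    and x': "x' = lc a x c y" and y': "y' = lc b x d y"
    and O: "a \<in> valring av F" "b \<in> valring av F" "c \<in> valring av F" "d \<in> valring av F"
    and D: "av (a * d - b * c) = 1"
  shows "lattice_span av F x' y' = lattice_span av F x y"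
proof
  show "lattice_span av F x' y' \<subseteq> lattice_span av F x y" by (rule span_sub[OF na sf x' y' O(1,2,3,4)])
  define e where "e = a * d - b * c"
  have e0: "e \<noteq> 0" using D na_zero[OF na, of 0] unfolding e_def by auto
  have eF: "e \<in> F" using O sf unfolding e_def by (auto simp: valring_iff sf_diff sf_mult)
  have vr: "z \<in> valring av F \<Longrightarrow> z / e \<in> valring av F" for z
    using D eF sf unfolding e_def by (auto simp: valring_iff na_divide[OF na] sf_divide)
  have vrm: "z \<in> valring av F \<Longrightarrow> - z \<in> valring av F" for z
    using sf by (auto simp: valring_iff na_minus[OF na] sf_minus)
  have ee: "e = a * d - b * c" by (simp add: e_def)
  have k1: "d / e * (a * x1 + c * y1) + - c / e * (b * x1 + d * y1) = x1" for x1 y1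
  proof -
    have "d / e * (a * x1 + c * y1) + - c / e * (b * x1 + d * y1) = (d * (a * x1 + c * y1) + - c * (b * x1 + d * y1)) / e"
      by (simp add: add_divide_distrib diff_divide_distrib)
    also have "d * (a * x1 + c * y1) + - c * (b * x1 + d * y1) = e * x1" unfolding ee by (simp add: algebra_simps)
    finally show ?thesis using e0 by simp
  qed
  have k2: "- b / e * (a * x1 + c * y1) + a / e * (b * x1 + d * y1) = y1" for x1 y1
  proof -
    have "- b / e * (a * x1 + c * y1) + a / e * (b * x1 + d * y1) = (- b * (a * x1 + c * y1) + a * (b * x1 + d * y1)) / e"
      by (simp add: add_divide_distrib diff_divide_distrib)
    also have "- b * (a * x1 + c * y1) + a * (b * x1 + d * y1) = e * y1" unfolding ee by (simp add: algebra_simps)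
    finally show ?thesis using e0 by simp
  qed
  have hx: "x = lc (d / e) x' (- c / e) y'" using x' y' k1 unfolding lc_def by (cases x; cases y) simp
  have hy: "y = lc (- b / e) x' (a / e) y'" using x' y' k2 unfolding lc_def by (cases x; cases y) simp
  have o: "d / e \<in> valring av F" "- b / e \<in> valring av F" "- c / e \<in> valring av F" "a / e \<in> valring av F"
    using O vr vrm by auto
  show "lattice_span av F x y \<subseteq> lattice_span av F x' y'"
    by (rule span_sub[OF na sf hx hy o])
qed

lemma mvec_lc: "mvec A (lc a u b w) = lc a (mvec A u) b (mvec A w)"
  by (cases A; cases u; cases w) (simp add: lc_def algebra_simps)

lemma image_setcompr2: "f ` {g a b | a b. P a b} = {f (g a b) | a b. P a b}" by blast
lemma image_setcompr1: "f ` {g a | a. P a} = {f (g a) | a. P a}" by blast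

lemma mvec_span: "mvec A ` lattice_span av F u w = lattice_span av F (mvec A u) (mvec A w)"
  unfolding span_lc image_setcompr2 by (simp add: mvec_lc)

lemma vscale_lc: "(\<lambda>(x, y). (t * x, t * y)) (lc a u b w) = lc a (vsc t u) b (vsc t w)"
  by (simp add: lc_def vsc_def algebra_simps)

lemma vscale_span: "vscale t (lattice_span av F u w) = lattice_span av F (vsc t u) (vsc t w)"
  unfolding span_lc vscale_def image_setcompr2 vscale_lc by (rule refl)

lemma vscale_vscale: "vscale s (vscale t L) = vscale (s * t) L"
proof -
  have "(\<lambda>(x, y). (s * x, s * y)) ((\<lambda>(x, y). (t * x, t * y)) v) = (\<lambda>(x, y). (s * t * x, s * t * y)) v" for v
    by (cases v) (simp add: algebra_simps)
  then show ?thesis unfolding vscale_def image_image by simp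
qed

lemma hclass_vscale: assumes sf: "subfield F" and l: "l \<in> F" "l \<noteq> 0"
  shows "hclass F (vscale l L) = hclass F L"
proof
  show "hclass F (vscale l L) \<subseteq> hclass F L"
    unfolding hclass_def using sf l by (auto simp: vscale_vscale sf_mult)
  show "hclass F L \<subseteq> hclass F (vscale l L)"
  proof
    fix M assume "M \<in> hclass F L"
    then obtain t where t: "t \<in> F" "t \<noteq> 0" "M = vscale t L" by (auto simp: hclass_def)
    have "M = vscale (t / l) (vscale l L)" using t l by (simp add: vscale_vscale)
    moreover have "t / l \<in> F" "t / l \<noteq> 0" using t l sf by (auto simp: sf_divide)
    ultimately show "M \<in> hclass F (vscale l L)" unfolding hclass_def by blast
  qed
qed

lemma mvec_vscale: "mvec A ` vscale t L = vscale t (mvec A ` L)"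
proof -
  have "mvec A ((\<lambda>(x, y). (t * x, t * y)) v) = (\<lambda>(x, y). (t * x, t * y)) (mvec A v)" for v
    by (cases A; cases v) (simp add: algebra_simps)
  then show ?thesis unfolding vscale_def image_image by simp
qed

definition actv :: "'c::field mat2 \<Rightarrow> 'c vec2 set set \<Rightarrow> 'c vec2 set set" where
  "actv A v = (\<lambda>L. mvec A ` L) ` v"

lemma actv_hclass: "actv A (hclass F L) = hclass F (mvec A ` L)"
  unfolding actv_def hclass_def image_setcompr1 by (simp add: mvec_vscale)

lemma pgl_act_vertex_actv: "pgl_act_vertex g = actv (rep g)"
  by (simp add: fun_eq_iff pgl_act_vertex_rep actv_def)

lemma mvec_vsc': "mvec A (vsc t w) = vsc t (mvec A w)" by (rule mvec_vsc)

lemma vertex_map: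
  assumes na: "nonarch_abs av" and sf: "subfield F"
    and Au: "mvec A u = lc p u q w" and Aw: "mvec A w = lc r u s w"
    and F: "p \<in> F" "q \<in> F" "r \<in> F" "s \<in> F" "t \<in> F" "t' \<in> F" "l \<in> F"
    and nz: "t \<noteq> 0" "t' \<noteq> 0" "l \<noteq> 0"
    and c1: "av (p / l) \<le> 1" and c2: "av (q / (l * t')) \<le> 1" and c3: "av (t * r / l) \<le> 1"
    and c4: "av (t * s / (l * t')) \<le> 1" and c5: "av (t * (p * s - q * r) / (l * l * t')) = 1"
  shows "actv A (hclass F (lattice_span av F u (vsc t w))) = hclass F (lattice_span av F u (vsc t' w))"
proof -
  have "actv A (hclass F (lattice_span av F u (vsc t w))) = hclass F (lattice_span av F (mvec A u) (vsc t (mvec A w)))"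
    by (simp add: actv_hclass mvec_span mvec_vsc)
  also have "lattice_span av F (mvec A u) (vsc t (mvec A w)) = lattice_span av F (vsc l u) (vsc l (vsc t' w))"
  proof (rule span_change[OF na sf])
    show "mvec A u = lc (p / l) (vsc l u) (q / (l * t')) (vsc l (vsc t' w))"
      using Au nz by (simp add: lc_def vsc_def field_simps)
    show "vsc t (mvec A w) = lc (t * r / l) (vsc l u) (t * s / (l * t')) (vsc l (vsc t' w))"
      using Aw nz by (simp add: lc_def vsc_def field_simps)
    show "p / l \<in> valring av F" "t * r / l \<in> valring av F" "q / (l * t') \<in> valring av F" "t * s / (l * t') \<in> valring av F"
      using F c1 c2 c3 c4 sf by (auto simp: valring_iff sf_divide sf_mult)
    have "p / l * (t * s / (l * t')) - t * r / l * (q / (l * t')) = t * (p * s - q * r) / (l * l * t')"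
      using nz by (simp add: field_simps)
    then show "av (p / l * (t * s / (l * t')) - t * r / l * (q / (l * t'))) = 1" using c5 by simp
  qed
  also have "\<dots> = vscale l (lattice_span av F u (vsc t' w))" by (simp add: vscale_span)
  finally show ?thesis using hclass_vscale[OF sf F(7) nz(3)] by simp
qed



lemma P1_vec_inF: "subfield F \<Longrightarrow> l \<in> P1_of F \<Longrightarrow> inF F (P1_vec l)"
  by (auto simp: P1_of_def inF_def sf_0 sf_1)

lemma P1_vec_indep: "l1 \<noteq> l2 \<Longrightarrow> vdet (P1_vec l1) (P1_vec l2) \<noteq> 0"
  by (cases l1; cases l2) (auto simp: vdet_def)

lemma decomp: assumes "vdet u w \<noteq> 0"
  shows "v = lc (vdet v w / vdet u w) u (vdet u v / vdet u w) w"
proof -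
  obtain u1 u2 where u: "u = (u1, u2)" by (cases u)
  obtain w1 w2 where w: "w = (w1, w2)" by (cases w)
  obtain v1 v2 where v: "v = (v1, v2)" by (cases v)
  have D: "u1 * w2 - u2 * w1 \<noteq> 0" using assms u w by (simp add: vdet_def)
  define E where "E = u1 * w2 - u2 * w1"
  have E0: "E \<noteq> 0" using D E_def by simp
  have c1: "(v1 * w2 - v2 * w1) / E * u1 + (u1 * v2 - u2 * v1) / E * w1 = v1"
  proof -
    have "(v1 * w2 - v2 * w1) / E * u1 + (u1 * v2 - u2 * v1) / E * w1 = ((v1 * w2 - v2 * w1) * u1 + (u1 * v2 - u2 * v1) * w1) / E"
      by (simp add: add_divide_distrib)
    also have "(v1 * w2 - v2 * w1) * u1 + (u1 * v2 - u2 * v1) * w1 = E * v1" unfolding E_def by (simp add: algebra_simps)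
    finally show ?thesis using E0 by simp
  qed
  have c2: "(v1 * w2 - v2 * w1) / E * u2 + (u1 * v2 - u2 * v1) / E * w2 = v2"
  proof -
    have "(v1 * w2 - v2 * w1) / E * u2 + (u1 * v2 - u2 * v1) / E * w2 = ((v1 * w2 - v2 * w1) * u2 + (u1 * v2 - u2 * v1) * w2) / E"
      by (simp add: add_divide_distrib)
    also have "(v1 * w2 - v2 * w1) * u2 + (u1 * v2 - u2 * v1) * w2 = E * v2" unfolding E_def by (simp add: algebra_simps)
    finally show ?thesis using E0 by simp
  qed
  show ?thesis using c1 c2 unfolding u w v lc_def vdet_def E_def by simp
qed

lemma lc_zero: assumes "vdet u w \<noteq> 0" "lc a u b w = (0, 0)" shows "a = 0 \<and> b = 0"
proof -
  obtain u1 u2 where u: "u = (u1, u2)" by (cases u)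
  obtain w1 w2 where w: "w = (w1, w2)" by (cases w)
  have D: "u1 * w2 - u2 * w1 \<noteq> 0" using assms u w by (simp add: vdet_def)
  have e1: "a * u1 + b * w1 = 0" and e2: "a * u2 + b * w2 = 0" using assms(2) u w by (simp_all add: lc_def)
  have "a * (u1 * w2 - u2 * w1) = w2 * (a * u1 + b * w1) - w1 * (a * u2 + b * w2)" by (simp add: algebra_simps)
  then have a: "a = 0" using e1 e2 D by simp
  have "b * (u1 * w2 - u2 * w1) = u1 * (a * u2 + b * w2) - u2 * (a * u1 + b * w1)" by (simp add: algebra_simps)
  then have "b = 0" using e1 e2 D by simp
  with a show ?thesis by simp
qed

lemma lc_inj: assumes "vdet u w \<noteq> 0" "lc a u b w = lc a' u b' w" shows "a = a' \<and> b = b'"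
proof -
  have "lc (a - a') u (b - b') w = (0, 0)" using assms(2) by (simp add: lc_def algebra_simps prod_eq_iff)
  then have "a - a' = 0 \<and> b - b' = 0" by (rule lc_zero[OF assms(1)])
  then show ?thesis by simp
qed

lemma vdet_vsc: "vdet u (vsc t w) = t * vdet u w" by (simp add: vdet_def vsc_def algebra_simps)

lemma mvec_inF: assumes "subfield F" "A \<in> GL2 F" "inF F v" shows "inF F (mvec A v)"
  using assms by (cases A; cases v) (auto simp: GL2_def inF_def sf_add sf_mult)

lemma mobius_vec: assumes sf: "subfield F" and A: "A \<in> GL2 F" and l: "l \<in> P1_of F"
  shows "\<exists>k. k \<in> F \<and> k \<noteq> 0 \<and> mvec A (P1_vec l) = vsc k (P1_vec (mobius A l))"
proof -
  have nz: "mvec A (P1_vec l) \<noteq> (0, 0)" using mvec_nonzero[OF GL2_det[OF A] P1_vec_nonzero] .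
  have iF: "inF F (mvec A (P1_vec l))" using mvec_inF[OF sf A P1_vec_inF[OF sf l]] .
  obtain k where "k \<noteq> 0" "k = fst (mvec A (P1_vec l)) \<or> k = snd (mvec A (P1_vec l))"
    "mvec A (P1_vec l) = vsc k (P1_vec (pr (mvec A (P1_vec l))))" using P1vec_pr[OF nz] by blast
  moreover then have "k \<in> F" using iF by (auto simp: inF_def)
  ultimately show ?thesis by (auto simp: mobius_pr)
qed

lemma mobius_P1: assumes sf: "subfield F" and A: "A \<in> GL2 F" and l: "l \<in> P1_of F"
  shows "mobius A l \<in> P1_of F"
  using assms by (cases A; cases l) (auto simp: P1_of_def GL2_def sf_add sf_mult sf_divide)

lemma lattice_is: assumes "inF F u" "inF F w" "vdet u w \<noteq> 0" shows "is_lattice av F (lattice_span av F u w)"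
  using assms unfolding is_lattice_def inF_def vdet_def by blast

lemma hclass_self: "subfield F \<Longrightarrow> L \<in> hclass F L"
proof -
  assume sf: "subfield F"
  have "vscale 1 L = L" unfolding vscale_def by (simp add: case_prod_unfold)
  then show ?thesis unfolding hclass_def using sf_1[OF sf] by force
qed

lemma inF_vsc: "subfield F \<Longrightarrow> t \<in> F \<Longrightarrow> inF F w \<Longrightarrow> inF F (vsc t w)"
  by (simp add: inF_def vsc_def sf_mult)

lemma vr_0: "subfield F \<Longrightarrow> nonarch_abs av \<Longrightarrow> 0 \<in> valring av F"
  using na_zero[of av 0] by (simp add: valring_iff sf_0)
lemma vr_1: "subfield F \<Longrightarrow> nonarch_abs av \<Longrightarrow> 1 \<in> valring av F"
  by (simp add: valring_iff sf_1 na_one)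

lemma in_span: "a \<in> valring av F \<Longrightarrow> b \<in> valring av F \<Longrightarrow> lc a u b w \<in> lattice_span av F u w"
  by (auto simp: span_lc)

lemma mult_lt1: "0 \<le> (x::real) \<Longrightarrow> x \<le> 1 \<Longrightarrow> 0 \<le> y \<Longrightarrow> y < 1 \<Longrightarrow> x * y < 1"
  by (meson le_less_trans mult_left_le_one_le)

lemma edge_adj:
  assumes na: "nonarch_abs av" and sf: "subfield F" and u: "uniformizer av F \<pi>"
    and uF: "inF F u" and wF: "inF F w" and D: "vdet u w \<noteq> 0" and t: "t \<in> F" "t \<noteq> 0"
  shows "bt_adj av F (hclass F (lattice_span av F u (vsc t w))) (hclass F (lattice_span av F u (vsc (\<pi> * t) w)))"
proof -
  have \<pi>F: "\<pi> \<in> F" and r0: "0 < av \<pi>" and r1: "av \<pi> < 1" using u by (auto simp: uniformizer_def)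
  have \<pi>0: "\<pi> \<noteq> 0" using r0 na_zero[OF na, of 0] by auto
  have \<pi>O: "\<pi> \<in> valring av F" using \<pi>F r1 by (simp add: valring_iff)
  have O0: "0 \<in> valring av F" and O1: "1 \<in> valring av F" using vr_0[OF sf na] vr_1[OF sf na] .
  define x where "x = vsc t w"
  define y where "y = vsc (\<pi> * t) w"
  define L where "L = lattice_span av F u x"
  define L' where "L' = lattice_span av F u y"
  have Dx: "vdet u x \<noteq> 0" and Dy: "vdet u y \<noteq> 0" using D t \<pi>0 by (simp_all add: x_def y_def vdet_vsc)
  have xF: "inF F x" and yF: "inF F y" using inF_vsc[OF sf] t wF \<pi>F sf by (auto simp: x_def y_def sf_mult)
  have v1: "hclass F L \<in> bt_vertices av F" unfolding bt_vertices_def L_def using lattice_is[OF uF xF Dx] by blast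
  have v2: "hclass F L' \<in> bt_vertices av F" unfolding bt_vertices_def L'_def using lattice_is[OF uF yF Dy] by blast
  have yx: "y = vsc \<pi> x" by (simp add: x_def y_def vsc_def algebra_simps)
  have s1: "L' \<subseteq> L" unfolding L'_def L_def
    by (rule span_sub[OF na sf _ _ O1 O0 O0 \<pi>O]) (simp_all add: lc_def yx vsc_def)
  have s2: "vscale \<pi> L \<subseteq> L'" unfolding L'_def L_def vscale_span
    by (rule span_sub[OF na sf _ _ \<pi>O O0 O0 O1]) (simp_all add: lc_def yx vsc_def)
  have n1: "x \<notin> L'"
  proof
    assume "x \<in> L'"
    then obtain a b where ab: "a \<in> valring av F" "b \<in> valring av F" "x = lc a u b y" by (auto simp: L'_def span_lc)
    have "lc 0 u 1 x = lc a u (b * \<pi>) x" using ab(3) by (simp add: lc_def yx vsc_def algebra_simps)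
    then have "b * \<pi> = 1" using lc_inj[OF Dx, of 0 1 a "b * \<pi>"] by simp
    then have "av b * av \<pi> = 1" using na_mult[OF na, of b \<pi>] na_one[OF na] by simp
    moreover have "av b * av \<pi> < 1" using ab(2) r1 r0 na_nonneg[OF na, of b]
      by (intro mult_lt1) (auto simp: valring_iff)
    ultimately show False by simp
  qed
  have x1: "x \<in> L" unfolding L_def using in_span[OF O0 O1, of u x] by (simp add: lc_def)
  have n2: "u \<notin> vscale \<pi> L"
  proof
    assume "u \<in> vscale \<pi> L"
    then have "u \<in> lattice_span av F (vsc \<pi> u) (vsc \<pi> x)" by (simp only: L_def vscale_span)
    then obtain a b where ab: "a \<in> valring av F" "b \<in> valring av F" "u = lc a (vsc \<pi> u) b (vsc \<pi> x)"
      by (auto simp: span_lc)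
    have "lc 1 u 0 x = lc (a * \<pi>) u (b * \<pi>) x" using ab(3) by (simp add: lc_def vsc_def algebra_simps)
    then have "a * \<pi> = 1" using lc_inj[OF Dx, of 1 0 "a * \<pi>" "b * \<pi>"] by simp
    then have "av a * av \<pi> = 1" using na_mult[OF na, of a \<pi>] na_one[OF na] by simp
    moreover have "av a * av \<pi> < 1" using ab(1) r1 r0 na_nonneg[OF na, of a]
      by (intro mult_lt1) (auto simp: valring_iff)
    ultimately show False by simp
  qed
  have u1: "u \<in> L'" unfolding L'_def using in_span[OF O1 O0, of u y] by (simp add: lc_def)
  have "vscale \<pi> L \<subset> L'" using s2 n2 u1 by blast
  moreover have "L' \<subset> L" using s1 n1 x1 by blast
  ultimately show ?thesis unfolding bt_adj_def using v1 v2 hclass_self[OF sf] u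
    unfolding L_def L'_def x_def y_def by blast
qed



lemma in_geod: "t \<in> F \<Longrightarrow> t \<noteq> 0 \<Longrightarrow>
   hclass F (lattice_span av F (P1_vec l1) (vsc t (P1_vec l2))) \<in> geodesic av F l1 l2"
  unfolding geodesic_def vsc_def by blast

lemma in_Tv: "l1 \<in> L \<Longrightarrow> l2 \<in> L \<Longrightarrow> l1 \<noteq> l2 \<Longrightarrow> v \<in> geodesic av F l1 l2 \<Longrightarrow> v \<in> T_vertices av F L v0"
  unfolding T_vertices_def by auto

lemma av_vdet_F: "subfield F \<Longrightarrow> inF F u \<Longrightarrow> inF F w \<Longrightarrow> vdet u w \<in> F"
  by (simp add: vdet_def inF_def sf_diff sf_mult)

lemma decompF:
  assumes sf: "subfield F" and uF: "inF F u" and wF: "inF F w" and vF: "inF F v" and D: "vdet u w \<noteq> 0"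
  shows "\<exists>r s. r \<in> F \<and> s \<in> F \<and> v = lc r u s w"
  using decomp[OF D, of v] av_vdet_F[OF sf] uF wF vF sf D by (meson sf_divide)

lemma caseA:
  fixes F :: "'c::field set"
  assumes na: "nonarch_abs av" and sf: "subfield F" and u: "uniformizer av F \<pi>"
    and A: "A \<in> GL2 F" and n: "n > 0" and c: "mpow A n = (c, 0, 0, c)"
    and l: "l \<in> L" and l': "l' \<in> L" and ll: "l \<noteq> l'" and LF: "L \<subseteq> P1_of F" and fx: "mobius A l = l"
  shows "\<exists>v \<in> T_vertices av F L v0. actv A v = v"
proof -
  define u where "u = P1_vec l"
  define w where "w = P1_vec l'"
  have uF: "inF F u" and wF: "inF F w" using P1_vec_inF[OF sf] l l' LF by (auto simp: u_def w_def)
  have D: "vdet u w \<noteq> 0" using P1_vec_indep[OF ll] by (simp add: u_def w_def)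
  have u0: "u \<noteq> (0, 0)" using P1_vec_nonzero u_def by simp
  obtain k where k: "k \<in> F" "k \<noteq> 0" "mvec A u = vsc k u" using mobius_vec[OF sf A, of l] l LF fx
    by (auto simp: u_def)
  obtain r s where rs: "r \<in> F" "s \<in> F" "mvec A w = lc r u s w"
    using decompF[OF sf uF wF mvec_inF[OF sf A wF] D] by blast
  have kn: "k ^ n = c" using eigen_pow[OF k(3) u0 c] .
  have sn: "s ^ n = c"
  proof (cases "s = k")
    case True then show ?thesis using kn by simp
  next
    case False
    define v where "v = lc r u (s - k) w"
    have "mvec A v = vsc s v" unfolding v_def mvec_lc k(3) rs(3)
      by (simp add: lc_def vsc_def algebra_simps)
    moreover have "v \<noteq> (0, 0)" using lc_zero[OF D, of r "s - k"] False unfolding v_def by auto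
    ultimately show ?thesis using eigen_pow[OF _ _ c] by blast
  qed
  have aks: "av s = av k"
  proof -
    have "av k ^ n = av s ^ n" using kn sn by (simp add: na_power[OF na, symmetric])
    then show ?thesis using power_eq_imp_eq_base[of "av k" n "av s"] na_nonneg[OF na] n by simp
  qed
  have ak: "av k > 0" using na_pos[OF na k(2)] .
  have r0: "0 < av \<pi>" "av \<pi> < 1" and \<pi>F: "\<pi> \<in> F" using u by (auto simp: uniformizer_def)
  obtain t where t: "t \<in> F" "t \<noteq> 0" "av (t * r / k) \<le> 1"
  proof (cases "r = 0")
    case True
    then show ?thesis using that[of 1] sf na_zero[OF na, of 0] by (simp add: sf_1)
  next
    case False
    have ar: "av r > 0" using na_pos[OF na False] .
    obtain m where m: "av \<pi> ^ m < av k / av r" using real_arch_pow_inv[of "av k / av r" "av \<pi>"] ak ar r0 by auto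
    have "\<pi> \<noteq> 0" using r0 na_zero[OF na, of 0] by auto
    moreover have "av (\<pi> ^ m * r / k) \<le> 1"
      using m ak ar by (simp add: na_divide[OF na] na_mult[OF na] na_power[OF na] field_simps)
    ultimately show ?thesis using that[of "\<pi> ^ m"] sf \<pi>F by (simp add: sf_power)
  qed
  have Au: "mvec A u = lc k u 0 w" using k(3) by (simp add: lc_def vsc_def)
  have act: "actv A (hclass F (lattice_span av F u (vsc t w))) = hclass F (lattice_span av F u (vsc t w))"
  proof (rule vertex_map[OF na sf Au rs(3) k(1) sf_0[OF sf] rs(1) rs(2) t(1) t(1) k(1) t(2) t(2) k(2)])
    show "av (k / k) \<le> 1" using k(2) na_one[OF na] by simp
    show "av (0 / (k * t)) \<le> 1" using na_zero[OF na, of 0] by simp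
    show "av (t * r / k) \<le> 1" by (rule t(3))
    show "av (t * s / (k * t)) \<le> 1" using t(2) aks ak by (simp add: na_divide[OF na] na_mult[OF na])
    have "t * (k * s - 0 * r) / (k * k * t) = s / k" using t(2) k(2) by (simp add: field_simps)
    then show "av (t * (k * s - 0 * r) / (k * k * t)) = 1" using aks ak by (simp add: na_divide[OF na])
  qed
  have "hclass F (lattice_span av F u (vsc t w)) \<in> T_vertices av F L v0"
    using in_Tv[OF l l' ll in_geod[OF t(1,2)]] by (simp add: u_def w_def)
  with act show ?thesis by blast
qed


lemma pwa: "(\<rho>::real) \<noteq> 0 \<Longrightarrow> a + b = c \<Longrightarrow> power_int \<rho> a * power_int \<rho> b = power_int \<rho> c"
  by (metis power_int_add)

lemma caseB:
  fixes F :: "'c::field set"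
  assumes na: "nonarch_abs av" and ac: "alg_closed_field TYPE('c)" and sf: "subfield F" and u: "uniformizer av F \<pi>"
    and A: "A \<in> GL2 F" and n: "n > 0" and c: "mpow A n = (c, 0, 0, c)"
    and l1: "l1 \<in> L" and l2: "mobius A l1 \<in> L" and neq: "mobius A l1 \<noteq> l1" and LF: "L \<subseteq> P1_of F"
  shows "\<exists>\<sigma>. ((\<exists>v\<in>T_vertices av F L v0. \<sigma> = {v}) \<or> \<sigma> \<in> T_edges av F L) \<and> actv A ` \<sigma> = \<sigma>"
proof -
  define l2' where "l2' = mobius A l1"
  have l2': "l2' \<in> L" and ll: "l1 \<noteq> l2'" using l2 neq by (auto simp: l2'_def)
  define u where "u = P1_vec l1"
  define w where "w = P1_vec l2'"
  have uF: "inF F u" and wF: "inF F w" using P1_vec_inF[OF sf] l1 l2' LF by (auto simp: u_def w_def)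
  have D: "vdet u w \<noteq> 0" using P1_vec_indep[OF ll] by (simp add: u_def w_def)
  obtain q where q: "q \<in> F" "q \<noteq> 0" "mvec A u = vsc q w" using mobius_vec[OF sf A, of l1] l1 LF
    by (auto simp: u_def w_def l2'_def)
  have Au: "mvec A u = lc 0 u q w" using q(3) by (simp add: lc_def vsc_def)
  obtain r s where rs: "r \<in> F" "s \<in> F" "mvec A w = lc r u s w"
    using decompF[OF sf uF wF mvec_inF[OF sf A wF] D] by blast
  have r0: "r \<noteq> 0"
  proof
    assume r: "r = 0"
    define v where "v = lc s u (- q) w"
    have "mvec A v = (0, 0)" unfolding v_def mvec_lc Au rs(3) r by (simp add: lc_def algebra_simps)
    moreover have "v \<noteq> (0, 0)" using lc_zero[OF D, of s "- q"] q(2) unfolding v_def by auto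
    ultimately show False using mvec_nonzero[OF GL2_det[OF A]] by blast
  qed
  have eig: "z ^ n = c" if z: "z * z = s * z + q * r" for z
  proof -
    define v where "v = lc r u z w"
    have e1: "mvec A v = lc (r * 0 + z * r) u (r * q + z * s) w" unfolding v_def mvec_lc Au rs(3) lc_lc ..
    have e2: "r * q + z * s = z * z" unfolding z by (simp add: algebra_simps)
    have e3: "vsc z v = lc (z * r) u (z * z) w" by (simp add: v_def lc_def vsc_def algebra_simps)
    have "mvec A v = vsc z v" using e1 e2 e3 by simp
    moreover have "v \<noteq> (0, 0)" using lc_zero[OF D, of r z] r0 unfolding v_def by auto
    ultimately show ?thesis using eigen_pow[OF _ _ c] by blast
  qed
  have "degree [:- (q * r), - s, 1:] > 0" by simp
  then obtain z1 where "poly [:- (q * r), - s, 1:] z1 = 0" using ac unfolding alg_closed_field_def by blast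
  then have z1: "z1 * z1 = s * z1 + q * r" by (simp add: algebra_simps)
  define z2 where "z2 = s - z1"
  have "z2 * z2 - s * z2 = z1 * z1 - s * z1" unfolding z2_def by (simp add: algebra_simps)
  then have z2: "z2 * z2 = s * z2 + q * r" unfolding z1 by (simp add: algebra_simps)
  have az: "av z1 = av z2"
  proof -
    have "av z1 ^ n = av z2 ^ n" using eig[OF z1] eig[OF z2] by (simp add: na_power[OF na, symmetric])
    then show ?thesis using power_eq_imp_eq_base[of "av z1" n "av z2"] na_nonneg[OF na] n by simp
  qed
  have as: "av s \<le> av z1" using na_ultra[OF na, of z1 z2] az unfolding z2_def by simp
  have "- (z1 * z2) = z1 * z1 - s * z1" unfolding z2_def by (simp add: algebra_simps)
  then have "q * r = - (z1 * z2)" unfolding z1 by simp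
  then have "av q * av r = av z1 * av z2" by (simp add: na_mult[OF na, symmetric] na_minus[OF na])
  then have aqr: "av q * av r = av z1 * av z1" using az by simp
  have key: "av s * av s \<le> av q * av r" unfolding aqr using as na_nonneg[OF na, of s] by (simp add: mult_mono)
  define \<rho> where "\<rho> = av \<pi>"
  have rho: "0 < \<rho>" "\<rho> < 1" and \<pi>F: "\<pi> \<in> F" using u by (auto simp: uniformizer_def \<rho>_def)
  have \<pi>0: "\<pi> \<noteq> 0" using rho na_zero[OF na, of 0] \<rho>_def by auto
  have rho0: "\<rho> \<noteq> 0" using rho by simp
  obtain kq where kq: "av q = power_int \<rho> kq" using val_exists[OF na sf u q(1,2)] \<rho>_def by blast
  obtain kr where kr: "av r = power_int \<rho> kr" using val_exists[OF na sf u rs(1) r0] \<rho>_def by blast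
  define m where "m = (kq + kr) div 2"
  define lam where "lam = power_int \<pi> m"
  define t where "t = power_int \<pi> (m - kr)"
  have al: "av lam = power_int \<rho> m" and at: "av t = power_int \<rho> (m - kr)"
    by (simp_all add: lam_def t_def na_power_int[OF na] \<rho>_def)
  have lF: "lam \<in> F" "lam \<noteq> 0" and tF: "t \<in> F" "t \<noteq> 0"
    using sf \<pi>F \<pi>0 by (simp_all add: lam_def t_def sf_power_int)
  have P: "power_int \<rho> j > 0" for j using rho by simp
  have T1: "hclass F (lattice_span av F u (vsc t w)) \<in> geodesic av F l1 l2'"
    using in_geod[OF tF] by (simp add: u_def w_def)
  have c3: "av (t * r / lam) = 1"
  proof -
    have "av (t * r / lam) = power_int \<rho> (m - kr) * power_int \<rho> kr / power_int \<rho> m"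
      by (simp add: na_divide[OF na] na_mult[OF na] at kr al)
    also have "power_int \<rho> (m - kr) * power_int \<rho> kr = power_int \<rho> m" by (rule pwa[OF rho0]) simp
    finally show ?thesis using P[of m] rho0 by simp
  qed
  have "even (kq + kr) \<or> odd (kq + kr)" by blast
  then show ?thesis
  proof
    assume ev: "even (kq + kr)"
    then have mm: "kq + kr = m + m" unfolding m_def by auto
    have sb: "av s \<le> power_int \<rho> m"
    proof (rule ccontr)
      assume "\<not> ?thesis"
      then have "power_int \<rho> m * power_int \<rho> m < av s * av s" using P[of m] by (simp add: mult_strict_mono)
      also have "\<dots> \<le> power_int \<rho> kq * power_int \<rho> kr" using key kq kr by simp
      also have "\<dots> = power_int \<rho> m * power_int \<rho> m" using pwa[OF rho0 mm] pwa[OF rho0, of m m "m + m"] by simp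
      finally show False by simp
    qed
    have act: "actv A (hclass F (lattice_span av F u (vsc t w))) = hclass F (lattice_span av F u (vsc t w))"
    proof (rule vertex_map[OF na sf Au rs(3) sf_0[OF sf] q(1) rs(1) rs(2) tF(1) tF(1) lF(1) tF(2) tF(2) lF(2)])
      show "av (0 / lam) \<le> 1" using na_zero[OF na, of 0] by simp
      have "av (q / (lam * t)) = power_int \<rho> kq / (power_int \<rho> m * power_int \<rho> (m - kr))"
        by (simp add: na_divide[OF na] na_mult[OF na] at kq al)
      also have "power_int \<rho> m * power_int \<rho> (m - kr) = power_int \<rho> kq" by (rule pwa[OF rho0]) (use mm in simp)
      finally show "av (q / (lam * t)) \<le> 1" using P[of kq] rho0 by simp
      show "av (t * r / lam) \<le> 1" using c3 by simp
      have "av (t * s / (lam * t)) = av s / power_int \<rho> m" using tF(2) na_pos[OF na tF(2)]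
        by (simp add: na_divide[OF na] na_mult[OF na] al)
      then show "av (t * s / (lam * t)) \<le> 1" using sb P[of m] by simp
      have "av (t * (0 * s - q * r) / (lam * lam * t)) = power_int \<rho> kq * power_int \<rho> kr / (power_int \<rho> m * power_int \<rho> m)"
        using tF(2) na_pos[OF na tF(2)] by (simp add: na_divide[OF na] na_mult[OF na] na_minus[OF na] al kq kr)
      also have "power_int \<rho> kq * power_int \<rho> kr = power_int \<rho> m * power_int \<rho> m"
        using pwa[OF rho0 mm] pwa[OF rho0, of m m "m + m"] by simp
      finally show "av (t * (0 * s - q * r) / (lam * lam * t)) = 1" using P[of m] rho0 by simp
    qed
    show ?thesis
      by (rule exI[of _ "{hclass F (lattice_span av F u (vsc t w))}"]) (use act in_Tv[OF l1 l2' ll T1] in auto)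
  next
    assume od: "odd (kq + kr)"
    then have mm: "kq + kr = m + m + 1" unfolding m_def by presburger
    have sb: "av s \<le> power_int \<rho> (m + 1)"
    proof (cases "s = 0")
      case True then show ?thesis using na_zero[OF na, of 0] P[of "m+1"] by simp
    next
      case False
      obtain j where j: "av s = power_int \<rho> j" using val_exists[OF na sf u rs(2) False] \<rho>_def by blast
      have "power_int \<rho> (j + j) = av s * av s" using pwa[OF rho0, of j j "j + j"] j by simp
      also have "\<dots> \<le> power_int \<rho> (kq + kr)" using key kq kr pwa[OF rho0, of kq kr] by simp
      finally have "kq + kr \<le> j + j" using powi_le_iff[OF rho] by blast
      then have "m + 1 \<le> j" using mm by simp
      then show ?thesis using j powi_le_iff[OF rho] by simp
    qed
    have sb': "av s \<le> power_int \<rho> m"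
    proof -
      have "power_int \<rho> (m + 1) \<le> power_int \<rho> m" using powi_le_iff[OF rho] by simp
      then show ?thesis using sb by simp
    qed
    have \<pi>tF: "\<pi> * t \<in> F" "\<pi> * t \<noteq> 0" using sf \<pi>F tF \<pi>0 by (simp_all add: sf_mult)
    have \<pi>lF: "\<pi> * lam \<in> F" "\<pi> * lam \<noteq> 0" using sf \<pi>F lF \<pi>0 by (simp_all add: sf_mult)
    have a\<pi>: "av \<pi> = \<rho>" by (simp add: \<rho>_def)
    have qx: "power_int \<rho> m * (\<rho> * power_int \<rho> (m - kr)) = power_int \<rho> kq"
    proof -
      have "\<rho> * power_int \<rho> (m - kr) = power_int \<rho> (1 + (m - kr))" using pwa[OF rho0, of 1 "m - kr"] by simp
      then show ?thesis using pwa[OF rho0, of m "1 + (m - kr)" kq] mm by simp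
    qed
    have qr2: "power_int \<rho> kq * power_int \<rho> kr = power_int \<rho> m * power_int \<rho> m * \<rho>"
      using pwa[OF rho0, of kq kr] pwa[OF rho0, of m m] pwa[OF rho0, of "m + m" 1] mm by simp
    have act1: "actv A (hclass F (lattice_span av F u (vsc t w))) = hclass F (lattice_span av F u (vsc (\<pi> * t) w))"
    proof (rule vertex_map[OF na sf Au rs(3) sf_0[OF sf] q(1) rs(1) rs(2) tF(1) \<pi>tF(1) lF(1) tF(2) \<pi>tF(2) lF(2)])
      show "av (0 / lam) \<le> 1" using na_zero[OF na, of 0] by simp
      have "av (q / (lam * (\<pi> * t))) = power_int \<rho> kq / (power_int \<rho> m * (\<rho> * power_int \<rho> (m - kr)))"
        by (simp add: na_divide[OF na] na_mult[OF na] at kq al a\<pi>)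
      then show "av (q / (lam * (\<pi> * t))) \<le> 1" using qx P[of kq] by simp
      show "av (t * r / lam) \<le> 1" using c3 by simp
      have "av (t * s / (lam * (\<pi> * t))) = av s / (power_int \<rho> m * \<rho>)" using tF(2) na_pos[OF na tF(2)]
        by (simp add: na_divide[OF na] na_mult[OF na] al a\<pi>)
      moreover have "power_int \<rho> m * \<rho> = power_int \<rho> (m + 1)" using pwa[OF rho0, of m 1] by simp
      ultimately show "av (t * s / (lam * (\<pi> * t))) \<le> 1" using sb P[of "m+1"] by simp
      have "av (t * (0 * s - q * r) / (lam * lam * (\<pi> * t))) = power_int \<rho> kq * power_int \<rho> kr / (power_int \<rho> m * power_int \<rho> m * \<rho>)"
        using tF(2) na_pos[OF na tF(2)] by (simp add: na_divide[OF na] na_mult[OF na] na_minus[OF na] al kq kr a\<pi>)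
      then show "av (t * (0 * s - q * r) / (lam * lam * (\<pi> * t))) = 1" using qr2 P[of m] rho by simp
    qed
    have act2: "actv A (hclass F (lattice_span av F u (vsc (\<pi> * t) w))) = hclass F (lattice_span av F u (vsc t w))"
    proof (rule vertex_map[OF na sf Au rs(3) sf_0[OF sf] q(1) rs(1) rs(2) \<pi>tF(1) tF(1) \<pi>lF(1) \<pi>tF(2) tF(2) \<pi>lF(2)])
      show "av (0 / (\<pi> * lam)) \<le> 1" using na_zero[OF na, of 0] by simp
      have "av (q / (\<pi> * lam * t)) = power_int \<rho> kq / (power_int \<rho> m * (\<rho> * power_int \<rho> (m - kr)))"
        by (simp add: na_divide[OF na] na_mult[OF na] at kq al a\<pi>)
      then show "av (q / (\<pi> * lam * t)) \<le> 1" using qx P[of kq] by simp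
      have "\<pi> * t * r / (\<pi> * lam) = t * r / lam" using \<pi>0 by simp
      then show "av (\<pi> * t * r / (\<pi> * lam)) \<le> 1" using c3 by simp
      have "\<pi> * t * s / (\<pi> * lam * t) = s / lam" using \<pi>0 tF(2) by simp
      moreover have "av (s / lam) = av s / power_int \<rho> m" by (simp add: na_divide[OF na] al)
      ultimately show "av (\<pi> * t * s / (\<pi> * lam * t)) \<le> 1" using sb' P[of m] by simp
      have "\<pi> * t * (0 * s - q * r) / (\<pi> * lam * (\<pi> * lam) * t) = - (q * r) / (lam * lam * \<pi>)"
        using \<pi>0 tF(2) lF(2) by (simp add: field_simps)
      moreover have "av (- (q * r) / (lam * lam * \<pi>)) = power_int \<rho> kq * power_int \<rho> kr / (power_int \<rho> m * power_int \<rho> m * \<rho>)"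
        by (simp add: na_divide[OF na] na_mult[OF na] na_minus[OF na] al kq kr a\<pi>)
      ultimately show "av (\<pi> * t * (0 * s - q * r) / (\<pi> * lam * (\<pi> * lam) * t)) = 1" using qr2 P[of m] rho by simp
    qed
    define v1 where "v1 = hclass F (lattice_span av F u (vsc t w))"
    define v2 where "v2 = hclass F (lattice_span av F u (vsc (\<pi> * t) w))"
    have T2: "v2 \<in> geodesic av F l1 l2'" using in_geod[OF \<pi>tF] by (simp add: u_def w_def v2_def)
    have adj: "bt_adj av F v1 v2" unfolding v1_def v2_def by (rule edge_adj[OF na sf u uF wF D tF])
    have "{v1, v2} \<in> T_edges av F L" unfolding T_edges_def using adj l1 l2' ll T1 T2 v1_def by blast
    moreover have "actv A ` {v1, v2} = {v1, v2}" using act1 act2 unfolding v1_def v2_def by auto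
    ultimately show ?thesis by blast
  qed
qed



lemma component:
  fixes F :: "'s \<Rightarrow> 'c::field set"
  assumes na: "nonarch_abs av" and ac: "alg_closed_field TYPE('c)"
    and loc: "\<forall>s\<in>S. local_field av (F s)"
    and sub: "pgl_subgroup S F \<Gamma>"
    and pl: "plectic_semisimple_with av S F \<Gamma> Lp"
    and g: "\<gamma> \<in> \<Gamma>" "finite_order S F \<gamma>" and s: "s \<in> S" and ne: "Lp s \<noteq> {}"
  shows "\<exists>\<sigma>. ((\<exists>v\<in>T_vertices av (F s) (Lp s) v0. \<sigma> = {v}) \<or> \<sigma> \<in> T_edges av (F s) (Lp s))
           \<and> actv (rep (\<gamma> s)) ` \<sigma> = \<sigma>"
proof -
  have sf: "subfield (F s)" using loc s local_sf by blast
  obtain \<pi> where u: "uniformizer av (F s) \<pi>" using loc s by (auto simp: local_field_def)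
  have gP: "\<gamma> \<in> PGL2_S S F" using g sub by (auto simp: pgl_subgroup_def)
  define A where "A = rep (\<gamma> s)"
  have A: "A \<in> GL2 (F s)" using rep_prop[OF gP s sf] by (simp add: A_def)
  obtain n c where nc: "n > 0" "mpow A n = (c, 0, 0, c)" using finite_order_mpow[OF gP s sf g(2)] A_def by blast
  have LF: "Lp s \<subseteq> P1_of (F s)" and nsg: "\<forall>a. Lp s \<noteq> {a}" using pl s by (auto simp: plectic_semisimple_with_def)
  have inv: "\<forall>l\<in>Lp s. mobius A l \<in> Lp s"
    using Lp_invariant[OF na ac loc sub pl g(1) s] by (simp add: A_def pgl_act_rep)
  show ?thesis
  proof (cases "\<exists>l\<in>Lp s. mobius A l = l")
    case True
    then obtain l where l: "l \<in> Lp s" "mobius A l = l" by blast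
    obtain l' where l': "l' \<in> Lp s" "l \<noteq> l'" using nsg l(1) by blast
    obtain v where "v \<in> T_vertices av (F s) (Lp s) v0" "actv A v = v"
      using caseA[OF na sf u A nc(1) nc(2) l(1) l'(1) l'(2) LF l(2)] by blast
    then show ?thesis unfolding A_def[symmetric] by (intro exI[of _ "{v}"]) auto
  next
    case False
    obtain l1 where l1: "l1 \<in> Lp s" using ne by blast
    show ?thesis unfolding A_def[symmetric]
      using caseB[OF na ac sf u A nc(1) nc(2) l1] inv l1 False LF by blast
  qed
qed

theorem lemma2p19:
  fixes p :: nat and av :: "'c::field \<Rightarrow> real" and S :: "'s set"
    and F :: "'s \<Rightarrow> 'c set" and \<Gamma> :: "('s \<Rightarrow> 'c mat2 set) set"
    and Lp :: "'s \<Rightarrow> 'c P1 set" and vtx :: "'s \<Rightarrow> 'c vec2 set set"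
    and \<gamma> :: "'s \<Rightarrow> 'c mat2 set"
  assumes C: "is_C p av"
    and S: "finite S" "S \<noteq> {}"
    and loc: "\<forall>s\<in>S. local_field av (F s)"
    and sub: "pgl_subgroup S F \<Gamma>"
    and pl: "plectic_semisimple_with av S F \<Gamma> Lp"
    and vtx: "\<forall>s\<in>S. Lp s = {} \<longrightarrow> vtx s \<in> bt_vertices av (F s)
                  \<and> (\<forall>g\<in>\<Gamma>. pgl_act_vertex (g s) (vtx s) = vtx s)"
    and g: "\<gamma> \<in> \<Gamma>" "finite_order S F \<gamma>"
  shows "\<exists>\<sigma>. polysimplex av S F Lp vtx \<sigma> \<and>
           (\<forall>s\<in>S. pgl_act_vertex (\<gamma> s) ` \<sigma> s = \<sigma> s)"
proof -
  have na: "nonarch_abs av" and ac: "alg_closed_field TYPE('c)" using C by (auto simp: is_C_def)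
  define P where "P = (\<lambda>s \<sigma>. ((\<exists>v\<in>T_vertices av (F s) (Lp s) (vtx s). \<sigma> = {v}) \<or> \<sigma> \<in> T_edges av (F s) (Lp s))
           \<and> actv (rep (\<gamma> s)) ` \<sigma> = \<sigma>)"
  have ex: "\<exists>\<sigma>. P s \<sigma>" if s: "s \<in> S" for s
  proof (cases "Lp s = {}")
    case True
    have "pgl_act_vertex (\<gamma> s) (vtx s) = vtx s" using vtx s True g(1) by blast
    then have "actv (rep (\<gamma> s)) (vtx s) = vtx s" by (simp add: pgl_act_vertex_actv)
    moreover have "vtx s \<in> T_vertices av (F s) (Lp s) (vtx s)" using True by (simp add: T_vertices_def)
    ultimately show ?thesis unfolding P_def by (intro exI[of _ "{vtx s}"]) auto
  next
    case False
    show ?thesis unfolding P_def using component[OF na ac loc sub pl g s False] by blast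
  qed
  define \<sigma> where "\<sigma> = (\<lambda>s. if s \<in> S then (SOME \<sigma>. P s \<sigma>) else {})"
  have P\<sigma>: "P s (\<sigma> s)" if "s \<in> S" for s using someI_ex[OF ex[OF that]] that by (simp add: \<sigma>_def)
  have "polysimplex av S F Lp vtx \<sigma>"
    unfolding polysimplex_def using P\<sigma> by (auto simp: \<sigma>_def P_def)
  moreover have "\<forall>s\<in>S. pgl_act_vertex (\<gamma> s) ` \<sigma> s = \<sigma> s"
    using P\<sigma> by (simp add: P_def pgl_act_vertex_actv)
  ultimately show ?thesis by blast
qed

end
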